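(* Let $W=\langle s,t: s^2=t^2=(st)^m=1\rangle$ be a Coxeter group of rank $2$ ($m\ge 2$ the order of $st$), and let $\pi_{\mathcal A}$ be the character of the permutation action of $W$ on its reflection arrangement $\mathcal A$. Then $W$ acts on the degree $1$ component of $A(W)$ with character $\pi_{\mathcal A}$, and on the degree $2$ (top) component $A_{\{0\}}$ of $A(W)$ with character $\Psi_S=\pi_{\mathcal A}-1_S$. Consequently $W$ acts on $A(W)$ with character $2\pi_{\mathcal A}$.
   Context: $W$ acts as a reflection group on $\mathbb R^2$, hence on $\mathbb C^2$. $T$ is the set of reflections of $W$, $H_t$ the reflecting hyperplane ($1$-eigenspace) of $t\in T$, and $\mathcal A=\{H_t:t\in T\}$, permuted by $W$. The Orlik–Solomon algebra $A(W)$ is the $\mathbb C$-algebra generated by $a_t$ ($t\in T$) subject to $a_ta_{t'}=-a_{t'}a_t$ and $\sum_{i=1}^p(-1)^ia_{t_1}\cdots\widehat{a_{t_i}}\cdots a_{t_p}=0$ whenever $\{H_{t_1},\dots,H_{t_p}\}$ is linearly dependent; $W$ acts by $a_t.w=a_{w^{-1}tw}$. It is graded, the degree $p$ component spanned by products $a_{t_1}\cdots a_{t_p}$ with $\dim(H_{t_1}\cap\dots\cap H_{t_p})=2-p$. $1_S$ is the trivial character. *)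

theory Defs
  imports "HOL-Analysis.Analysis"
begin

definition sref :: "real^2^2" where
  "sref = (\<chi> i j. if i = j then (if i = 1 then 1 else -1) else 0)"

text \<open>Simple reflection t: reflection in the line through 0 at angle pi/m,
  so that s t is a rotation of order m.\<close>
definition tref :: "nat \<Rightarrow> real^2^2" where
  "tref m = (\<chi> i j. if i = 1 \<and> j = 1 then cos (2 * pi / real m)
                    else if i = 2 \<and> j = 2 then - cos (2 * pi / real m)
                    else sin (2 * pi / real m))"

text \<open>W = the group generated by s and t (a finite group, so closure
  under right multiplication by the generators gives the whole group).\<close>
inductive_set dihedral :: "nat \<Rightarrow> (real^2^2) set" for m where
  one: "mat 1 \<in> dihedral m"
| mul_s: "w \<in> dihedral m \<Longrightarrow> w ** sref \<in> dihedral m"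
| mul_t: "w \<in> dihedral m \<Longrightarrow> w ** tref m \<in> dihedral m"

definition fixspace :: "real^2^2 \<Rightarrow> (real^2) set" where
  "fixspace w = {x. w *v x = x}"

definition is_reflection :: "real^2^2 \<Rightarrow> bool" where
  "is_reflection w \<longleftrightarrow> w ** w = mat 1 \<and> dim (fixspace w) = 1"

definition refls :: "nat \<Rightarrow> (real^2^2) set" where
  "refls m = {w \<in> dihedral m. is_reflection w}"

definition arrangement :: "nat \<Rightarrow> (real^2) set set" where
  "arrangement m = fixspace ` refls m"

definition permchar :: "nat \<Rightarrow> real^2^2 \<Rightarrow> complex" where
  "permchar m w = of_nat (card {H \<in> arrangement m. (\<lambda>x. w *v x) ` H = H})"

definition smult :: "complex \<Rightarrow> ('v \<Rightarrow> complex) \<Rightarrow> ('v \<Rightarrow> complex)" where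
  "smult c f = (\<lambda>x. c * f x)"

definition lincomb :: "(nat \<Rightarrow> complex) \<Rightarrow> ('v \<Rightarrow> complex) list \<Rightarrow> ('v \<Rightarrow> complex)" where
  "lincomb c bs = (\<lambda>x. \<Sum>j<length bs. c j * (bs ! j) x)"

definition cspan :: "('v \<Rightarrow> complex) set \<Rightarrow> ('v \<Rightarrow> complex) set" where
  "cspan S = {f. \<exists>vs c. set vs \<subseteq> S \<and> f = lincomb c vs}"

text \<open>bs is a list of vectors of U whose classes form a basis of U/K.\<close>
definition qbasis :: "('v \<Rightarrow> complex) set \<Rightarrow> ('v \<Rightarrow> complex) set
                      \<Rightarrow> ('v \<Rightarrow> complex) list \<Rightarrow> bool" where
  "qbasis U K bs \<longleftrightarrow> set bs \<subseteq> U \<and> U \<subseteq> cspan (K \<union> set bs) \<and>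
     (\<forall>c. lincomb c bs \<in> K \<longrightarrow> (\<forall>j<length bs. c j = 0))"

text \<open>Trace of the map induced by g on the quotient U/K, computed as the
  trace of its matrix with respect to a basis of U/K.\<close>
definition qtrace :: "('v \<Rightarrow> complex) set \<Rightarrow> ('v \<Rightarrow> complex) set
                      \<Rightarrow> (('v \<Rightarrow> complex) \<Rightarrow> ('v \<Rightarrow> complex)) \<Rightarrow> complex" where
  "qtrace U K g = (let bs = (SOME bs. qbasis U K bs) in
     \<Sum>i<length bs. (THE a. \<exists>c. c i = a \<and>
         (\<lambda>x. g (bs ! i) x - lincomb c bs x) \<in> K))"

text \<open>Elements of the free associative algebra on generators a_t are
  finitely supported functions on words (lists) of generators.\<close>
definition mono :: "'v list \<Rightarrow> ('v list \<Rightarrow> complex)" where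
  "mono xs = (\<lambda>ys. if ys = xs then 1 else 0)"

definition tmul :: "('v list \<Rightarrow> complex) \<Rightarrow> ('v list \<Rightarrow> complex) \<Rightarrow> ('v list \<Rightarrow> complex)" where
  "tmul f g = (\<lambda>zs. \<Sum>k\<le>length zs. f (take k zs) * g (drop k zs))"

definition tensors :: "nat \<Rightarrow> ((real^2^2) list \<Rightarrow> complex) set" where
  "tensors m = {f. finite {xs. f xs \<noteq> 0} \<and> (\<forall>xs. f xs \<noteq> 0 \<longrightarrow> set xs \<subseteq> refls m)}"

definition tensors_deg :: "nat \<Rightarrow> nat \<Rightarrow> ((real^2^2) list \<Rightarrow> complex) set" where
  "tensors_deg m p = {f \<in> tensors m. \<forall>xs. f xs \<noteq> 0 \<longrightarrow> length xs = p}"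

text \<open>{H_t1,...,H_tp} is linearly dependent iff codim(H_t1 \<inter> ... \<inter> H_tp) < p.\<close>
definition dependent_list :: "(real^2^2) list \<Rightarrow> bool" where
  "dependent_list ts \<longleftrightarrow>
     2 < dim (\<Inter>i\<in>{..<length ts}. fixspace (ts ! i)) + length ts"

definition relators :: "nat \<Rightarrow> ((real^2^2) list \<Rightarrow> complex) set" where
  "relators m =
     {(\<lambda>zs. mono [t, t'] zs + mono [t', t] zs) | t t'. t \<in> refls m \<and> t' \<in> refls m}
   \<union> {(\<lambda>zs. \<Sum>i<length ts. (-1) ^ (i + 1) * mono (take i ts @ drop (Suc i) ts) zs) | ts.
        set ts \<subseteq> refls m \<and> dependent_list ts}"

inductive_set os_ideal :: "nat \<Rightarrow> ((real^2^2) list \<Rightarrow> complex) set" for m where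
  zero: "(\<lambda>_. 0) \<in> os_ideal m"
| add: "f \<in> os_ideal m \<Longrightarrow> g \<in> os_ideal m \<Longrightarrow> (\<lambda>x. f x + g x) \<in> os_ideal m"
| scal: "f \<in> os_ideal m \<Longrightarrow> smult c f \<in> os_ideal m"
| gen: "r \<in> relators m \<Longrightarrow> set u \<subseteq> refls m \<Longrightarrow> set v \<subseteq> refls m \<Longrightarrow>
        tmul (tmul (mono u) r) (mono v) \<in> os_ideal m"

text \<open>Right action a_t . w = a_{w^-1 t w}, extended multiplicatively.\<close>
definition act :: "real^2^2 \<Rightarrow> ((real^2^2) list \<Rightarrow> complex) \<Rightarrow> ((real^2^2) list \<Rightarrow> complex)" where
  "act w f = (\<lambda>ys. f (map (\<lambda>t. w ** t ** matrix_inv w) ys))"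

definition oschar_deg :: "nat \<Rightarrow> nat \<Rightarrow> real^2^2 \<Rightarrow> complex" where
  "oschar_deg m p w = qtrace (tensors_deg m p) (os_ideal m \<inter> tensors_deg m p) (act w)"

definition oschar :: "nat \<Rightarrow> real^2^2 \<Rightarrow> complex" where
  "oschar m w = qtrace (tensors m) (os_ideal m) (act w)"

end

theory Submission
  imports Defs
begin


definition rot :: "real \<Rightarrow> real^2^2" where
  "rot a = (\<chi> i j. if i = 1 \<and> j = 1 then cos a else if i = 1 \<and> j = 2 then - sin a
              else if i = 2 \<and> j = 1 then sin a else cos a)"
definition flp :: "real \<Rightarrow> real^2^2" where
  "flp a = (\<chi> i j. if i = 1 \<and> j = 1 then cos a else if i = 2 \<and> j = 2 then - cos a else sin a)"

lemma rot_flp: "rot a ** flp b = flp (a + b)"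
  by (simp add: vec_eq_iff forall_2 matrix_matrix_mult_def sum_2 rot_def flp_def cos_add sin_add)
lemma flp_flp: "flp a ** flp b = rot (a - b)"
  by (simp add: vec_eq_iff forall_2 matrix_matrix_mult_def sum_2 rot_def flp_def cos_diff sin_diff)
lemma sref_flp: "sref = flp 0"
  by (simp add: vec_eq_iff forall_2 sref_def flp_def)
lemma tref_flp: "tref m = flp (2 * pi / real m)"
  by (simp add: vec_eq_iff forall_2 tref_def flp_def)
lemma one_rot: "mat 1 = rot 0"
  by (simp add: vec_eq_iff forall_2 mat_def rot_def)


lemma orth_rot: "orthogonal_matrix (rot a)"
  unfolding orthogonal_matrix
  by (simp add: vec_eq_iff forall_2 matrix_matrix_mult_def sum_2 rot_def transpose_def mat_def
      power2_eq_square[symmetric] algebra_simps)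
lemma orth_flp: "orthogonal_matrix (flp a)"
  unfolding orthogonal_matrix
  by (simp add: vec_eq_iff forall_2 matrix_matrix_mult_def sum_2 flp_def transpose_def mat_def
      power2_eq_square[symmetric] algebra_simps)

definition ang :: "nat \<Rightarrow> int \<Rightarrow> real" where "ang m k = 2 * pi * of_int k / real m"

lemma dih_form: "w \<in> dihedral m \<Longrightarrow> \<exists>k. w = rot (ang m k) \<or> w = flp (ang m k)"
proof (induction rule: dihedral.induct)
  case one
  then show ?case by (auto simp: one_rot ang_def intro: exI[of _ 0])
next
  case (mul_s w)
  then obtain k where "w = rot (ang m k) \<or> w = flp (ang m k)" by blast
  then show ?case by (auto simp: sref_flp rot_flp flp_flp)
next
  case (mul_t w)
  then obtain k where "w = rot (ang m k) \<or> w = flp (ang m k)" by blast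
  moreover have "ang m k + 2 * pi / real m = ang m (k+1)" "ang m k - 2 * pi / real m = ang m (k-1)"
    by (simp_all add: ang_def add_divide_distrib diff_divide_distrib algebra_simps)
  ultimately show ?case by (metis tref_flp rot_flp flp_flp)
qed

lemma cos_per: "cos (x + 2 * pi * of_int n) = cos x" and sin_per: "sin (x + 2 * pi * of_int n) = sin x"
  by (simp_all add: cos_add sin_add)

lemma ang_mod: assumes "m > 0" shows "ang m k = ang m (k mod int m) + 2 * pi * of_int (k div int m)"
proof -
  have "k = k mod int m + int m * (k div int m)" by simp
  then have "real_of_int k = real_of_int (k mod int m) + real m * real_of_int (k div int m)"
    by (metis of_int_add of_int_mult of_int_of_nat_eq)
  then show ?thesis using assms by (simp add: ang_def field_simps)
qed

lemma rot_mod: "m > 0 \<Longrightarrow> rot (ang m k) = rot (ang m (k mod int m))"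
  by (subst ang_mod, assumption, simp only: rot_def cos_per sin_per)
lemma flp_mod: "m > 0 \<Longrightarrow> flp (ang m k) = flp (ang m (k mod int m))"
  by (subst ang_mod, assumption, simp only: flp_def cos_per sin_per)

lemma finite_dih: assumes "m > 0" shows "finite (dihedral m)"
proof -
  have "dihedral m \<subseteq> (\<lambda>k. rot (ang m (int k))) ` {..<m} \<union> (\<lambda>k. flp (ang m (int k))) ` {..<m}"
  proof
    fix w assume "w \<in> dihedral m"
    then obtain k where k: "w = rot (ang m k) \<or> w = flp (ang m k)" using dih_form by blast
    define j where "j = nat (k mod int m)"
    have j: "int j = k mod int m" "j < m" using assms by (auto simp: j_def nat_less_iff)
    show "w \<in> (\<lambda>k. rot (ang m (int k))) ` {..<m} \<union> (\<lambda>k. flp (ang m (int k))) ` {..<m}"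
    proof -
      have "w = rot (ang m (int j)) \<or> w = flp (ang m (int j))"
        using k rot_mod[OF assms, of k] flp_mod[OF assms, of k] j(1) by simp
      then show ?thesis using j(2) by blast
    qed
  qed
  then show ?thesis by (rule finite_subset) auto
qed

lemma orth_dih: "w \<in> dihedral m \<Longrightarrow> orthogonal_matrix w"
  using dih_form orth_rot orth_flp by blast

lemma sref_dih: "sref \<in> dihedral m"
  using dihedral.mul_s[OF dihedral.one] by simp
lemma tref_dih: "tref m \<in> dihedral m"
  using dihedral.mul_t[OF dihedral.one] by simp

lemma mul_dih: "v \<in> dihedral m \<Longrightarrow> u \<in> dihedral m \<Longrightarrow> u ** v \<in> dihedral m"
proof (induction rule: dihedral.induct)
  case one then show ?case by simp
next
  case (mul_s w) then show ?case by (metis dihedral.mul_s matrix_mul_assoc)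
next
  case (mul_t w) then show ?case by (metis dihedral.mul_t matrix_mul_assoc)
qed

lemma sref_sym: "transpose sref = sref"
  by (simp add: vec_eq_iff forall_2 sref_def transpose_def)
lemma tref_sym: "transpose (tref m) = tref m"
  by (simp add: vec_eq_iff forall_2 tref_def transpose_def)

lemma transpose_dih: "w \<in> dihedral m \<Longrightarrow> transpose w \<in> dihedral m"
proof (induction rule: dihedral.induct)
  case one then show ?case by (simp add: transpose_mat dihedral.one)
next
  case (mul_s w) then show ?case by (simp add: matrix_transpose_mul sref_sym mul_dih sref_dih)
next
  case (mul_t w) then show ?case by (simp add: matrix_transpose_mul tref_sym mul_dih tref_dih)
qed

lemma matrix_inv_orth: assumes "orthogonal_matrix w" shows "matrix_inv w = transpose w"
proof -
  have ex: "\<exists>A'. w ** A' = mat 1 \<and> A' ** w = mat 1" using assms unfolding orthogonal_matrix_def by blast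
  have "w ** matrix_inv w = mat 1 \<and> matrix_inv w ** w = mat 1"
    unfolding matrix_inv_def by (rule someI_ex[OF ex])
  then have "transpose w ** (w ** matrix_inv w) = transpose w" by simp
  then show ?thesis using assms by (simp add: matrix_mul_assoc orthogonal_matrix_def)
qed


definition cj :: "real^2^2 \<Rightarrow> real^2^2 \<Rightarrow> real^2^2" where
  "cj w t = w ** t ** transpose w"

lemma orthD: "orthogonal_matrix w \<Longrightarrow> transpose w ** w = mat 1 \<and> w ** transpose w = mat 1"
  by (simp add: orthogonal_matrix_def)

lemma cj_inv: assumes "orthogonal_matrix w" shows "cj w (cj (transpose w) t) = t"
proof -
  have "cj w (cj (transpose w) t) = (w ** transpose w) ** t ** (w ** transpose w)"
    by (simp only: cj_def transpose_transpose matrix_mul_assoc)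
  then show ?thesis using orthD[OF assms] by simp
qed

lemma cj_inv': "orthogonal_matrix w \<Longrightarrow> cj (transpose w) (cj w t) = t"
  using cj_inv[of "transpose w"] by simp

lemma cj_dih: "w \<in> dihedral m \<Longrightarrow> t \<in> dihedral m \<Longrightarrow> cj w t \<in> dihedral m"
  by (simp add: cj_def mul_dih transpose_dih)

lemma fixspace_cj: assumes "orthogonal_matrix w"
  shows "fixspace (cj w t) = (\<lambda>x. w *v x) ` fixspace t"
proof (intro set_eqI iffI)
  fix x assume "x \<in> fixspace (cj w t)"
  then have x: "(w ** t ** transpose w) *v x = x" by (simp add: fixspace_def cj_def)
  have "t *v (transpose w *v x) = (transpose w ** w) *v (t *v (transpose w *v x))"
    using orthD[OF assms] by simp
  also have "\<dots> = transpose w *v ((w ** t ** transpose w) *v x)"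
    by (simp only: matrix_vector_mul_assoc matrix_mul_assoc)
  also have "\<dots> = transpose w *v x" using x by simp
  finally have "t *v (transpose w *v x) = transpose w *v x" .
  moreover have "x = w *v (transpose w *v x)"
    using orthD[OF assms] by (metis matrix_vector_mul_assoc matrix_vector_mul_lid)
  ultimately show "x \<in> (\<lambda>x. w *v x) ` fixspace t" by (auto simp: fixspace_def)
next
  fix x assume "x \<in> (\<lambda>x. w *v x) ` fixspace t"
  then obtain y where y: "t *v y = y" "x = w *v y" by (auto simp: fixspace_def)
  have "(w ** t ** transpose w) *v (w *v y) = (w ** t ** (transpose w ** w)) *v y"
    by (simp only: matrix_vector_mul_assoc matrix_mul_assoc)
  also have "\<dots> = w *v (t *v y)" using orthD[OF assms] by (simp add: matrix_vector_mul_assoc)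
  finally have "(w ** t ** transpose w) *v (w *v y) = w *v (t *v y)" .
  then show "x \<in> fixspace (cj w t)" using y by (simp add: fixspace_def cj_def)
qed

lemma dim_fixspace_cj: assumes "orthogonal_matrix w"
  shows "dim (fixspace (cj w t)) = dim (fixspace t)"
proof -
  have "inj (\<lambda>x. w *v x)"
    by (rule injI) (metis assms matrix_vector_mul_assoc matrix_vector_mul_lid orthD)
  then have "dim ((\<lambda>x. w *v x) ` fixspace t) = dim (fixspace t)"
    by (intro dim_image_eq matrix_vector_mul_linear) (auto intro: inj_on_subset)
  then show ?thesis using assms by (simp add: fixspace_cj)
qed

lemma refl_cj: assumes "w \<in> dihedral m" "t \<in> refls m" shows "cj w t \<in> refls m"
proof -
  have o: "orthogonal_matrix w" using assms orth_dih by blast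
  have tt: "t ** t = mat 1" using assms by (simp add: refls_def is_reflection_def)
  have "cj w t ** cj w t = w ** (t ** ((transpose w ** w) ** t)) ** transpose w"
    by (simp add: cj_def matrix_mul_assoc)
  also have "\<dots> = mat 1" using o tt by (simp add: orthD matrix_mul_assoc)
  finally show ?thesis using assms o
    by (auto simp: refls_def is_reflection_def cj_dih dim_fixspace_cj)
qed



lemma inner_mv: "((A::real^2^2) *v x) \<bullet> y = x \<bullet> (transpose A *v y)"
  by (simp add: inner_vec_def sum_2 matrix_vector_mult_def transpose_def algebra_simps)

lemma refl_sym: assumes "t \<in> refls m" shows "transpose t = t"
proof -
  have o: "orthogonal_matrix t" using assms orth_dih by (auto simp: refls_def)
  have tt: "t ** t = mat 1" using assms by (simp add: refls_def is_reflection_def)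
  have "transpose t = transpose t ** (t ** t)" using tt by simp
  also have "\<dots> = t" using o by (simp add: matrix_mul_assoc orthD)
  finally show ?thesis .
qed

lemma fixspace_subspace: "subspace (fixspace t)"
  by (auto simp: subspace_def fixspace_def matrix_vector_right_distrib matrix_vector_mult_scaleR)

lemma fixspace_inj: assumes "t \<in> refls m" "t' \<in> refls m" "fixspace t = fixspace t'"
  shows "t = t'"
proof -
  have tt: "t ** t = mat 1" "t' ** t' = mat 1" using assms by (simp_all add: refls_def is_reflection_def)
  have perp: "h \<bullet> c = 0" if "s \<in> refls m" "h \<in> fixspace s" "s *v c = - c" for s h c
  proof -
    have "h \<bullet> c = (s *v h) \<bullet> c" using that by (simp add: fixspace_def)
    also have "\<dots> = h \<bullet> (s *v c)" using refl_sym[OF that(1)] by (simp add: inner_mv)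
    also have "\<dots> = - (h \<bullet> c)" using that by simp
    finally show ?thesis by simp
  qed
  have "t *v v = t' *v v" for v
  proof -
    let ?d = "t *v v - t' *v v"
    have a: "v + t *v v \<in> fixspace t"
      using tt by (simp add: fixspace_def matrix_vector_right_distrib matrix_vector_mul_assoc add.commute)
    have b: "v + t' *v v \<in> fixspace t"
      using tt assms(3) by (simp add: fixspace_def matrix_vector_right_distrib matrix_vector_mul_assoc add.commute)
    have dH: "?d \<in> fixspace t"
      using subspace_diff[OF fixspace_subspace a b] by (simp add: algebra_simps)
    have c1: "t *v (v - t *v v) = - (v - t *v v)"
      using tt by (simp add: matrix_vector_mult_diff_distrib matrix_vector_mul_assoc)
    have c2: "t' *v (v - t' *v v) = - (v - t' *v v)"
      using tt by (simp add: matrix_vector_mult_diff_distrib matrix_vector_mul_assoc)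
    have "?d \<bullet> (v - t' *v v) = 0" using perp[OF assms(2), of ?d] dH assms(3) c2 by simp
    moreover have "?d \<bullet> (v - t *v v) = 0" using perp[OF assms(1) dH c1] .
    ultimately have "?d \<bullet> ?d = 0" by (simp add: inner_diff_right)
    then show ?thesis by simp
  qed
  then show ?thesis by (simp add: matrix_eq)
qed

lemma dim_refl: "t \<in> refls m \<Longrightarrow> dim (fixspace t) = 1"
  by (simp add: refls_def is_reflection_def)



lemma refl_int: assumes "t \<in> refls m" "t' \<in> refls m" "1 \<le> dim (fixspace t \<inter> fixspace t')"
  shows "t = t'"
proof -
  have s: "subspace (fixspace t \<inter> fixspace t')" by (simp add: fixspace_subspace subspace_inter)
  have "fixspace t \<inter> fixspace t' = fixspace t"
    by (rule subspace_dim_equal[OF s fixspace_subspace]) (use assms dim_refl in auto)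
  moreover have "fixspace t \<inter> fixspace t' = fixspace t'"
    by (rule subspace_dim_equal[OF s fixspace_subspace]) (use assms dim_refl in auto)
  ultimately show ?thesis using fixspace_inj assms by metis
qed

lemma dep_iff: assumes "set ts \<subseteq> refls m"
  shows "dependent_list ts \<longleftrightarrow> (3 \<le> length ts \<or> (length ts = 2 \<and> ts!0 = ts!1))"
proof (cases "length ts")
  case 0 then show ?thesis by (simp add: dependent_list_def)
next
  case (Suc n)
  show ?thesis
  proof (cases n)
    case 0
    then have "ts!0 \<in> refls m" using Suc assms by (auto simp: set_conv_nth)
    then show ?thesis using Suc 0 by (simp add: dependent_list_def dim_refl lessThan_Suc)
  next
    case (Suc k)
    show ?thesis
    proof (cases k)
      case 0
      then have l: "length ts = 2" using Suc \<open>length ts = Suc n\<close> by simp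
      then have r: "ts!0 \<in> refls m" "ts!1 \<in> refls m" using assms nth_mem[of 0 ts] nth_mem[of 1 ts] by auto
      have I: "(\<Inter>i\<in>{..<length ts}. fixspace (ts ! i)) = fixspace (ts!0) \<inter> fixspace (ts!1)"
        using l by (auto simp: lessThan_Suc numeral_2_eq_2)
      have "(2 < dim (fixspace (ts!0) \<inter> fixspace (ts!1)) + 2) \<longleftrightarrow> ts!0 = ts!1"
        using refl_int[OF r] dim_refl[OF r(1)] by auto
      then show ?thesis unfolding dependent_list_def I using l by simp
    next
      case (Suc j)
      then show ?thesis using \<open>n = Suc k\<close> \<open>length ts = Suc n\<close> by (simp add: dependent_list_def)
    qed
  qed
qed



lemma sref_refl: "sref \<in> refls m"
proof -
  have "sref ** sref = mat 1"
    by (simp add: vec_eq_iff forall_2 matrix_matrix_mult_def sum_2 sref_def mat_def)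
  moreover have "fixspace sref = {x. axis 2 1 \<bullet> x = 0}"
    by (auto simp: fixspace_def vec_eq_iff forall_2 matrix_vector_mult_def sum_2 sref_def inner_axis')
  moreover have "dim {x::real^2. axis 2 1 \<bullet> x = 0} = 1"
    by (subst dim_hyperplane) (auto simp: axis_eq_0_iff)
  ultimately show ?thesis by (simp add: refls_def is_reflection_def sref_dih)
qed

lemma finite_refls: "m > 0 \<Longrightarrow> finite (refls m)"
  using finite_dih by (auto simp: refls_def)



lemma permchar_eq: assumes "w \<in> dihedral m"
  shows "permchar m w = of_nat (card {t \<in> refls m. cj w t = t})"
proof -
  let ?S = "{t \<in> refls m. cj w t = t}"
  have o: "orthogonal_matrix w" using assms orth_dih by blast
  have eq: "{H \<in> arrangement m. (\<lambda>x. w *v x) ` H = H} = fixspace ` ?S"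
  proof (intro set_eqI iffI)
    fix H assume H: "H \<in> {H \<in> arrangement m. (\<lambda>x. w *v x) ` H = H}"
    then have A: "H \<in> arrangement m" and img: "(\<lambda>x. w *v x) ` H = H" by blast+
    from A obtain t where t: "t \<in> refls m" "H = fixspace t" unfolding arrangement_def by blast
    have "fixspace (cj w t) = fixspace t" using fixspace_cj[OF o, of t] img t(2) by simp
    then have "cj w t = t" using fixspace_inj[OF refl_cj[OF assms t(1)] t(1)] by simp
    then show "H \<in> fixspace ` ?S" using t by blast
  next
    fix H assume "H \<in> fixspace ` ?S"
    then obtain t where t: "t \<in> refls m" "cj w t = t" "H = fixspace t" by blast
    have "(\<lambda>x. w *v x) ` H = H" using fixspace_cj[OF o, of t] t by simp
    moreover have "H \<in> arrangement m" unfolding arrangement_def using t by blast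
    ultimately show "H \<in> {H \<in> arrangement m. (\<lambda>x. w *v x) ` H = H}" by blast
  qed
  have "inj_on fixspace ?S"
    by (rule inj_onI) (use fixspace_inj in blast)
  then have "card (fixspace ` ?S) = card ?S" by (rule card_image)
  then show ?thesis unfolding permchar_def eq by simp
qed


lemma sum_distinct_nth: "distinct L \<Longrightarrow> (\<Sum>j<length L. h (L!j)) = (\<Sum>a\<in>set L. h a)"
  by (rule sum.reindex_bij_betw[OF bij_betw_nth]) simp_all

locale kclosed =
  fixes K :: "('v \<Rightarrow> complex) set"
  assumes K0: "(\<lambda>_. 0) \<in> K"
    and Kadd: "\<And>f h. f \<in> K \<Longrightarrow> h \<in> K \<Longrightarrow> (\<lambda>x. f x + h x) \<in> K"
    and Kscal: "\<And>f c. f \<in> K \<Longrightarrow> (\<lambda>x. c * f x) \<in> K"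
begin

lemma Kdiff: "f \<in> K \<Longrightarrow> h \<in> K \<Longrightarrow> (\<lambda>x. f x - h x) \<in> K"
  using Kadd[of f "\<lambda>x. (-1) * h x"] Kscal[of h "-1"] by simp

lemma Ksum: "finite A \<Longrightarrow> (\<And>a. a \<in> A \<Longrightarrow> F a \<in> K) \<Longrightarrow> (\<lambda>x. \<Sum>a\<in>A. F a x) \<in> K"
proof (induction A rule: finite_induct)
  case empty then show ?case using K0 by simp
next
  case (insert a A)
  then show ?case using Kadd[of "F a" "\<lambda>x. \<Sum>a\<in>A. F a x"] by simp
qed

lemma Ksum_scal: assumes "finite A" "\<And>a. a \<in> A \<Longrightarrow> F a \<in> K"
  shows "(\<lambda>x. \<Sum>a\<in>A. c a * F a x) \<in> K"
proof -
  have "\<And>a. a \<in> A \<Longrightarrow> (\<lambda>x. c a * F a x) \<in> K" using assms(2) by (rule Kscal)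
  then show ?thesis using Ksum[OF assms(1), of "\<lambda>a x. c a * F a x"] by simp
qed

lemma coords_exist:
  assumes "f \<in> cspan (K \<union> set cs)"
  shows "\<exists>c. (\<lambda>x. f x - lincomb c cs x) \<in> K"
proof -
  obtain vs e where vs: "set vs \<subseteq> K \<union> set cs" "f = lincomb e vs"
    using assms unfolding cspan_def by blast
  have "\<exists>c. (\<lambda>x. lincomb e vs x - lincomb c cs x) \<in> K" using vs(1)
  proof (induction vs arbitrary: e)
    case Nil
    have "(\<lambda>x. lincomb e [] x - lincomb (\<lambda>_. 0) cs x) = (\<lambda>_. 0)" by (simp add: lincomb_def)
    then show ?case using K0 by metis
  next
    case (Cons v vs)
    obtain c where c: "(\<lambda>x. lincomb (\<lambda>j. e (Suc j)) vs x - lincomb c cs x) \<in> K"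
      using Cons by auto
    have split: "lincomb e (v # vs) x = e 0 * v x + lincomb (\<lambda>j. e (Suc j)) vs x" for x
      unfolding lincomb_def by (simp only: length_Cons sum.lessThan_Suc_shift nth_Cons_0 nth_Cons_Suc)
    show ?case
    proof (cases "v \<in> K")
      case True
      have "(\<lambda>x. lincomb e (v # vs) x - lincomb c cs x)
          = (\<lambda>x. e 0 * v x + (lincomb (\<lambda>j. e (Suc j)) vs x - lincomb c cs x))"
        by (simp add: split add_diff_eq)
      then show ?thesis using Kadd[OF Kscal[OF True] c] by metis
    next
      case False
      then obtain j where j: "j < length cs" "v = cs ! j" using Cons.prems by (auto simp: in_set_conv_nth)
      define c' where "c' = (\<lambda>l. c l + (if l = j then e 0 else 0))"
      have d: "(\<Sum>l<length cs. (if l = j then e 0 else 0) * (cs!l) x) = e 0 * v x" for x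
      proof -
        have "(\<Sum>l<length cs. (if l = j then e 0 else 0) * (cs!l) x)
            = (\<Sum>l<length cs. if l = j then e 0 * (cs!j) x else 0)"
          by (rule sum.cong) auto
        also have "\<dots> = e 0 * v x" using j by (simp only: sum.delta finite_lessThan lessThan_iff if_True)
        finally show ?thesis .
      qed
      have "lincomb c' cs x = lincomb c cs x + e 0 * v x" for x
        unfolding lincomb_def c'_def distrib_right sum.distrib d ..
      then have "(\<lambda>x. lincomb e (v # vs) x - lincomb c' cs x)
          = (\<lambda>x. lincomb (\<lambda>j. e (Suc j)) vs x - lincomb c cs x)"
        by (simp add: split)
      then show ?thesis using c by metis
    qed
  qed
  then show ?thesis using vs(2) by simp
qed

lemma lincomb_diff: "lincomb c cs x - lincomb c' cs x = lincomb (\<lambda>j. c j - c' j) cs x"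
  by (simp add: lincomb_def sum_subtractf left_diff_distrib)

lemma coords_unique:
  assumes qb: "qbasis U K cs"
    and h1: "(\<lambda>x. f x - lincomb c cs x) \<in> K" and h2: "(\<lambda>x. f x - lincomb c' cs x) \<in> K"
    and l: "l < length cs"
  shows "c l = c' l"
proof -
  have "(\<lambda>x. (f x - lincomb c' cs x) - (f x - lincomb c cs x)) \<in> K" by (rule Kdiff[OF h2 h1])
  moreover have "(\<lambda>x. (f x - lincomb c' cs x) - (f x - lincomb c cs x)) = lincomb (\<lambda>j. c j - c' j) cs"
    by (rule ext) (simp add: lincomb_diff[symmetric])
  ultimately have "lincomb (\<lambda>j. c j - c' j) cs \<in> K" by simp
  then show ?thesis using qb l unfolding qbasis_def by auto
qed

lemma coord_the:
  assumes qb: "qbasis U K cs" and h: "(\<lambda>x. f x - lincomb c cs x) \<in> K" and l: "l < length cs"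
  shows "(THE a. \<exists>c. c l = a \<and> (\<lambda>x. f x - lincomb c cs x) \<in> K) = c l"
proof (rule the_equality)
  show "\<exists>c'. c' l = c l \<and> (\<lambda>x. f x - lincomb c' cs x) \<in> K" using h by blast
next
  fix a assume "\<exists>c'. c' l = a \<and> (\<lambda>x. f x - lincomb c' cs x) \<in> K"
  then obtain c' where "c' l = a" "(\<lambda>x. f x - lincomb c' cs x) \<in> K" by blast
  then show "a = c l" using coords_unique[OF qb _ h l] by metis
qed

end

locale qsetup = kclosed K
  for K :: "('v \<Rightarrow> complex) set" +
  fixes U :: "('v \<Rightarrow> complex) set" and g :: "('v \<Rightarrow> complex) \<Rightarrow> ('v \<Rightarrow> complex)"
    and B :: "'i \<Rightarrow> ('v \<Rightarrow> complex)" and phi :: "'i \<Rightarrow> ('v \<Rightarrow> complex) \<Rightarrow> complex"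
    and I :: "'i set"
  assumes finI: "finite I"
    and BU: "\<And>a. a \<in> I \<Longrightarrow> B a \<in> U"
    and phi_add: "\<And>a f h. a \<in> I \<Longrightarrow> phi a (\<lambda>x. f x + h x) = phi a f + phi a h"
    and phi_scal: "\<And>a f c. a \<in> I \<Longrightarrow> phi a (\<lambda>x. c * f x) = c * phi a f"
    and phiK: "\<And>a f. a \<in> I \<Longrightarrow> f \<in> K \<Longrightarrow> phi a f = 0"
    and dual: "\<And>a b. a \<in> I \<Longrightarrow> b \<in> I \<Longrightarrow> phi a (B b) = (if a = b then 1 else 0)"
    and compl: "\<And>f. f \<in> U \<Longrightarrow> (\<lambda>x. f x - (\<Sum>a\<in>I. phi a f * B a x)) \<in> K"
    and gU: "\<And>f. f \<in> U \<Longrightarrow> g f \<in> U"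
    and gK: "\<And>f. f \<in> K \<Longrightarrow> g f \<in> K"
    and g_add: "\<And>f h. g (\<lambda>x. f x + h x) = (\<lambda>x. g f x + g h x)"
    and g_scal: "\<And>f c. g (\<lambda>x. c * f x) = (\<lambda>x. c * g f x)"
begin

lemma phi_sum: assumes a: "a \<in> I" and A: "finite A"
  shows "phi a (\<lambda>x. \<Sum>j\<in>A. c j * F j x) = (\<Sum>j\<in>A. c j * phi a (F j))"
  using A
proof (induction A rule: finite_induct)
  case empty
  have "phi a (\<lambda>x. 0 * B a x) = 0 * phi a (B a)" using a phi_scal by blast
  then show ?case by simp
next
  case (insert j A)
  then show ?case using a
    phi_add[of a "\<lambda>x. c j * F j x" "\<lambda>x. \<Sum>j\<in>A. c j * F j x"] phi_scal by simp
qed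

lemma phi_diff: "a \<in> I \<Longrightarrow> phi a (\<lambda>x. f x - h x) = phi a f - phi a h"
  using phi_add[of a f "\<lambda>x. (-1) * h x"] phi_scal[of a "-1" h] by simp

lemma g_sum: "finite A \<Longrightarrow> g (\<lambda>x. \<Sum>j\<in>A. c j * F j x) = (\<lambda>x. \<Sum>j\<in>A. c j * g (F j) x)"
proof (induction A rule: finite_induct)
  case empty
  have "g (\<lambda>x. 0 * (\<lambda>_. 0) x) = (\<lambda>x. 0 * g (\<lambda>_. 0) x)" by (rule g_scal)
  then show ?case by simp
next
  case (insert j A)
  then show ?case using g_add[of "\<lambda>x. c j * F j x" "\<lambda>x. \<Sum>j\<in>A. c j * F j x"] g_scal by simp
qed

lemma g_diff: "g (\<lambda>x. f x - h x) = (\<lambda>x. g f x - g h x)"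
  using g_add[of f "\<lambda>x. (-1) * h x"] g_scal[of "-1" h] by simp

theorem qtrace_eq: "qtrace U K g = (\<Sum>a\<in>I. phi a (g (B a)))"
proof -
  obtain L where L: "distinct L" "set L = I" using finite_distinct_list[OF finI] by blast
  define bs where "bs = map B L"
  have lc: "lincomb c bs x = (\<Sum>j<length L. c j * B (L!j) x)" for c x
    by (simp add: lincomb_def bs_def)
  have qb: "qbasis U K bs"
    unfolding qbasis_def
  proof (intro conjI allI impI subsetI)
    fix f assume f: "f \<in> set bs" then show "f \<in> U" using BU L by (auto simp: bs_def)
  next
    fix f assume f: "f \<in> U"
    define k where "k = (\<lambda>x. f x - (\<Sum>a\<in>I. phi a f * B a x))"
    have k: "k \<in> K" using compl[OF f] by (simp add: k_def)
    define c where "c = (\<lambda>j::nat. if j = 0 then 1 else phi (L!(j-1)) f)"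
    have "lincomb c (k # bs) x = c 0 * k x + (\<Sum>j<length L. c (Suc j) * (bs!j) x)" for x
      unfolding lincomb_def by (simp only: length_Cons sum.lessThan_Suc_shift nth_Cons_0 nth_Cons_Suc length_map bs_def)
    also have "\<dots>x = k x + (\<Sum>j<length L. phi (L!j) f * B (L!j) x)" for x
      by (simp add: c_def bs_def)
    also have "\<dots>x = f x" for x
      using sum_distinct_nth[OF L(1), of "\<lambda>a. phi a f * B a x"] L by (simp add: k_def)
    finally have "f = lincomb c (k # bs)" by auto
    moreover have "set (k # bs) \<subseteq> K \<union> set bs" using k by auto
    ultimately show "f \<in> cspan (K \<union> set bs)" unfolding cspan_def by blast
  next
    fix c j assume h: "lincomb c bs \<in> K" and j: "j < length bs"
    have jI: "L!j \<in> I" using j L by (auto simp: bs_def)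
    have "phi (L!j) (lincomb c bs) = (\<Sum>i<length L. c i * phi (L!j) (B (L!i)))"
      unfolding lc using phi_sum[OF jI, of "{..<length L}" c "\<lambda>i. B (L!i)"] by simp
    also have "\<dots> = (\<Sum>i<length L. if i = j then c i else 0)"
      using L j by (intro sum.cong) (auto simp: dual bs_def nth_eq_iff_index_eq)
    also have "\<dots> = c j" using j by (simp add: bs_def)
    finally show "c j = 0" using phiK[OF jI h] by simp
  qed
  define cs where "cs = (SOME bs. qbasis U K bs)"
  have qc: "qbasis U K cs" unfolding cs_def by (rule someI[of _ bs]) (rule qb)
  have csU: "cs ! i \<in> U" if "i < length cs" for i using qc that unfolding qbasis_def by auto
  have "\<forall>a\<in>I. \<exists>d. (\<lambda>x. g (B a) x - lincomb d cs x) \<in> K"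
    using coords_exist gU BU qc unfolding qbasis_def by blast
  then obtain D where D: "\<And>a. a \<in> I \<Longrightarrow> (\<lambda>x. g (B a) x - lincomb (D a) cs x) \<in> K"
    by metis
  have coord: "(THE a. \<exists>c. c i = a \<and> (\<lambda>x. g (cs ! i) x - lincomb c cs x) \<in> K)
      = (\<Sum>a\<in>I. phi a (cs!i) * D a i)" if i: "i < length cs" for i
  proof -
    have "g (\<lambda>x. (cs!i) x - (\<Sum>a\<in>I. phi a (cs!i) * B a x)) \<in> K"
      using gK compl csU[OF i] by blast
    then have k1: "(\<lambda>x. g (cs!i) x - (\<Sum>a\<in>I. phi a (cs!i) * g (B a) x)) \<in> K"
      by (simp add: g_diff g_sum[OF finI])
    have k2: "(\<lambda>x. \<Sum>a\<in>I. phi a (cs!i) * (g (B a) x - lincomb (D a) cs x)) \<in> K"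
      using Ksum_scal[OF finI, of "\<lambda>a x. g (B a) x - lincomb (D a) cs x" "\<lambda>a. phi a (cs!i)"] D by blast
    have eq: "lincomb (\<lambda>l. \<Sum>a\<in>I. phi a (cs!i) * D a l) cs x
        = (\<Sum>a\<in>I. phi a (cs!i) * lincomb (D a) cs x)" for x
      by (simp add: lincomb_def sum_distrib_left sum_distrib_right mult.assoc sum.swap[of _ I])
    have "(\<lambda>x. g (cs!i) x - lincomb (\<lambda>l. \<Sum>a\<in>I. phi a (cs!i) * D a l) cs x)
        = (\<lambda>x. (g (cs!i) x - (\<Sum>a\<in>I. phi a (cs!i) * g (B a) x))
             + (\<Sum>a\<in>I. phi a (cs!i) * (g (B a) x - lincomb (D a) cs x)))"
      by (simp add: eq right_diff_distrib sum_subtractf)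
    then have "(\<lambda>x. g (cs!i) x - lincomb (\<lambda>l. \<Sum>a\<in>I. phi a (cs!i) * D a l) cs x) \<in> K"
      using Kadd[OF k1 k2] by simp
    from coord_the[OF qc this i] show ?thesis by simp
  qed
  have "qtrace U K g = (\<Sum>i<length cs. \<Sum>a\<in>I. phi a (cs!i) * D a i)"
    unfolding qtrace_def Let_def cs_def[symmetric] using coord by simp
  also have "\<dots> = (\<Sum>a\<in>I. \<Sum>i<length cs. D a i * phi a (cs!i))"
    by (subst sum.swap) (simp add: mult.commute)
  also have "\<dots> = (\<Sum>a\<in>I. phi a (lincomb (D a) cs))"
  proof (rule sum.cong[OF refl])
    fix a assume a: "a \<in> I"
    show "(\<Sum>i<length cs. D a i * phi a (cs!i)) = phi a (lincomb (D a) cs)"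
      unfolding lincomb_def using phi_sum[OF a, of "{..<length cs}" "D a" "\<lambda>i. cs!i"] by simp
  qed
  also have "\<dots> = (\<Sum>a\<in>I. phi a (g (B a)))"
  proof (rule sum.cong[OF refl])
    fix a assume a: "a \<in> I"
    have "phi a (\<lambda>x. g (B a) x - lincomb (D a) cs x) = 0" using phiK[OF a D[OF a]] .
    then show "phi a (lincomb (D a) cs) = phi a (g (B a))"
      using phi_diff[OF a, of "g (B a)" "lincomb (D a) cs"] by (simp add: eta_contract_eq)
  qed
  finally show ?thesis .
qed

end


lemma mono_eq: "mono l zs = (if zs = l then 1 else 0)" by (simp add: mono_def)

lemma take_drop_eq_iff:
  assumes "k \<le> length zs"
  shows "(take k zs = a \<and> drop k zs = b) \<longleftrightarrow> (k = length a \<and> zs = a @ b)"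
  using assms by (auto simp: append_eq_conv_conj)

lemma tmul_mono_mono: "tmul (mono a) (mono b) = mono (a @ b)"
proof (rule ext)
  fix zs :: "'a list"
  have "tmul (mono a) (mono b) zs = (\<Sum>k\<le>length zs. if k = length a \<and> zs = a @ b then 1 else 0)"
    unfolding tmul_def by (intro sum.cong refl) (auto simp: mono_def dest: take_drop_eq_iff)
  also have "\<dots> = mono (a @ b) zs"
    by (auto simp: mono_def sum.delta')
  finally show "tmul (mono a) (mono b) zs = mono (a @ b) zs" .
qed

lemma tmul_sum_left: "finite J \<Longrightarrow> tmul (\<lambda>zs. \<Sum>j\<in>J. c j * f j zs) g = (\<lambda>zs. \<Sum>j\<in>J. c j * tmul (f j) g zs)"
  unfolding tmul_def by (rule ext) (simp add: sum_distrib_right sum_distrib_left mult.assoc sum.swap[of _ J])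

lemma tmul_sum_right: "finite J \<Longrightarrow> tmul f (\<lambda>zs. \<Sum>j\<in>J. c j * g j zs) = (\<lambda>zs. \<Sum>j\<in>J. c j * tmul f (g j) zs)"
  unfolding tmul_def by (rule ext) (simp add: sum_distrib_right sum_distrib_left mult.assoc mult.left_commute sum.swap[of _ J])

lemma tmul_add_left: "tmul (\<lambda>zs. f zs + h zs) g = (\<lambda>zs. tmul f g zs + tmul h g zs)"
  unfolding tmul_def by (rule ext) (simp add: distrib_right sum.distrib)

lemma tmul_add_right: "tmul f (\<lambda>zs. g zs + h zs) = (\<lambda>zs. tmul f g zs + tmul f h zs)"
  unfolding tmul_def by (rule ext) (simp add: distrib_left sum.distrib)

lemma tmul_mono_left: "tmul (mono u) f zs = (if take (length u) zs = u then f (drop (length u) zs) else 0)"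
proof (cases "take (length u) zs = u")
  case True
  then have l: "length u \<le> length zs" by (metis length_take min.absorb_iff2 nat_le_linear)
  have "tmul (mono u) f zs = (\<Sum>k\<le>length zs. if k = length u then f (drop k zs) else 0)"
    unfolding tmul_def
  proof (intro sum.cong refl)
    fix k assume k: "k \<in> {..length zs}"
    show "mono u (take k zs) * f (drop k zs) = (if k = length u then f (drop k zs) else 0)"
      using True k by (auto simp: mono_def)
  qed
  also have "\<dots> = f (drop (length u) zs)" using l by (simp add: sum.delta')
  finally show ?thesis using True by simp
next
  case False
  have "mono u (take k zs) = 0" if "k \<le> length zs" for k
  proof -
    have "take k zs \<noteq> u"
    proof
      assume "take k zs = u"
      then have "length u = k" using that by (metis length_take min.absorb2)
      then show False using False \<open>take k zs = u\<close> by simp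
    qed
    then show ?thesis by (simp add: mono_def)
  qed
  then show ?thesis using False unfolding tmul_def by simp
qed

lemma tmul_mono_right: "tmul f (mono v) zs
   = (if length v \<le> length zs \<and> drop (length zs - length v) zs = v then f (take (length zs - length v) zs) else 0)"
proof (cases "length v \<le> length zs \<and> drop (length zs - length v) zs = v")
  case True
  have "tmul f (mono v) zs = (\<Sum>k\<le>length zs. if k = length zs - length v then f (take k zs) else 0)"
    unfolding tmul_def
  proof (intro sum.cong refl)
    fix k assume k: "k \<in> {..length zs}"
    have "drop k zs = v \<longleftrightarrow> k = length zs - length v"
      using True k by (auto)
    then show "f (take k zs) * mono v (drop k zs) = (if k = length zs - length v then f (take k zs) else 0)"
      by (auto simp: mono_def)
  qed
  also have "\<dots> = f (take (length zs - length v) zs)" by (simp add: sum.delta')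
  finally show ?thesis using True by simp
next
  case False
  have "mono v (drop k zs) = 0" if "k \<le> length zs" for k
  proof -
    have "drop k zs \<noteq> v"
    proof
      assume d: "drop k zs = v"
      then have "length v = length zs - k" by (metis length_drop)
      then have "k = length zs - length v" "length v \<le> length zs" using that by auto
      then show False using False d by simp
    qed
    then show ?thesis by (simp add: mono_def)
  qed
  then show ?thesis using False unfolding tmul_def by auto
qed

lemma tmul_Nil_left: "tmul (mono []) f = f"
  by (rule ext) (simp add: tmul_mono_left)
lemma tmul_Nil_right: "tmul f (mono []) = f"
  by (rule ext) (simp add: tmul_mono_right)

lemma act_eq: "w \<in> dihedral m \<Longrightarrow> act w f = (\<lambda>ys. f (map (cj w) ys))"
  by (simp add: act_def matrix_inv_orth orth_dih cj_def[abs_def])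

lemma map_cj_eq: assumes "orthogonal_matrix w"
  shows "map (cj w) ys = l \<longleftrightarrow> ys = map (cj (transpose w)) l"
  using cj_inv[OF assms] cj_inv'[OF assms]
  by (auto simp: map_idI)

lemma act_mono: assumes "w \<in> dihedral m" shows "act w (mono l) = mono (map (cj (transpose w)) l)"
  using map_cj_eq[OF orth_dih[OF assms]] by (simp add: act_eq[OF assms] mono_def)

lemma act_add: "act w (\<lambda>x. f x + h x) = (\<lambda>x. act w f x + act w h x)"
  by (simp add: act_def)
lemma act_scal: "act w (\<lambda>x. c * f x) = (\<lambda>x. c * act w f x)"
  by (simp add: act_def)
lemma act_smult: "act w (smult c f) = smult c (act w f)"
  by (simp add: act_def smult_def)
lemma act_sum: "act w (\<lambda>x. \<Sum>j\<in>J. c j * f j x) = (\<lambda>x. \<Sum>j\<in>J. c j * act w (f j) x)"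
  by (simp add: act_def)
lemma act_tmul: "act w (tmul f g) = tmul (act w f) (act w g)"
  by (rule ext) (simp add: act_def tmul_def take_map drop_map)


definition anti :: "real^2^2 \<Rightarrow> real^2^2 \<Rightarrow> (real^2^2) list \<Rightarrow> complex" where
  "anti t t' = (\<lambda>zs. mono [t, t'] zs + mono [t', t] zs)"
definition bnd :: "(real^2^2) list \<Rightarrow> (real^2^2) list \<Rightarrow> complex" where
  "bnd ts = (\<lambda>zs. \<Sum>i<length ts. (-1) ^ (i + 1) * mono (take i ts @ drop (Suc i) ts) zs)"

lemma relators_iff: "r \<in> relators m \<longleftrightarrow>
   (\<exists>t t'. r = anti t t' \<and> t \<in> refls m \<and> t' \<in> refls m) \<or>
   (\<exists>ts. r = bnd ts \<and> set ts \<subseteq> refls m \<and> dependent_list ts)"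
  unfolding relators_def anti_def bnd_def by (simp only: Un_iff mem_Collect_eq)

lemma bnd2: "bnd [a, b] = (\<lambda>zs. - mono [b] zs + mono [a] zs)"
  by (rule ext) (simp add: bnd_def numeral_2_eq_2 lessThan_Suc)

lemma bnd3: "bnd [a, b, c] = (\<lambda>zs. - mono [b, c] zs + mono [a, c] zs - mono [a, b] zs)"
  by (rule ext) (simp add: bnd_def numeral_3_eq_3 lessThan_Suc)

lemma bnd_long: assumes "length zs < length ts - 1" shows "bnd ts zs = 0"
proof -
  have "mono (take i ts @ drop (Suc i) ts) zs = 0" if "i < length ts" for i
  proof -
    have "length (take i ts @ drop (Suc i) ts) = length ts - 1" using that by simp
    then have "zs \<noteq> take i ts @ drop (Suc i) ts" using assms by (metis less_irrefl)
    then show ?thesis by (simp add: mono_def)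
  qed
  then show ?thesis by (simp add: bnd_def)
qed

lemma len3_cases:
  assumes "length ts = 3" obtains a b c where "ts = [a, b, c]"
  using assms by (auto simp: numeral_3_eq_3 length_Suc_conv)
lemma len2_cases:
  assumes "length ts = 2" obtains a b where "ts = [a, b]"
  using assms by (auto simp: numeral_2_eq_2 length_Suc_conv)

lemma bnd_dep2: assumes "length ts = 2" "ts!0 = ts!1" shows "bnd ts = (\<lambda>_. 0)"
proof -
  obtain a b where ab: "ts = [a, b]" using len2_cases[OF assms(1)] .
  then have "a = b" using assms by simp
  then have "ts = [a, a]" using ab by simp
  then show ?thesis by (simp only: bnd2) simp
qed

lemma rel_short: assumes "r \<in> relators m" "length zs \<le> 1" shows "r zs = 0"
proof -
  consider (A) t t' where "r = anti t t'" | (B) ts where "r = bnd ts" "set ts \<subseteq> refls m" "dependent_list ts"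
    using assms(1) unfolding relators_iff by blast
  then show ?thesis
  proof cases
    case A
    have "zs \<noteq> [t, t']" "zs \<noteq> [t', t]" using assms(2) by auto
    then show ?thesis using A by (simp add: anti_def mono_def)
  next
    case B
    have "3 \<le> length ts \<or> (length ts = 2 \<and> ts!0 = ts!1)" using B(3) dep_iff[OF B(2)] by blast
    then show ?thesis
    proof
      assume "3 \<le> length ts"
      then have "length zs < length ts - 1" using assms(2) by linarith
      then show ?thesis using B(1) bnd_long by metis
    next
      assume "length ts = 2 \<and> ts ! 0 = ts ! 1"
      then have "bnd ts = (\<lambda>_. 0)" using bnd_dep2 by blast
      then show ?thesis using B(1) by simp
    qed
  qed
qed

definition dl :: "nat \<Rightarrow> real^2^2 \<Rightarrow> ((real^2^2) list \<Rightarrow> complex) \<Rightarrow> complex" where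
  "dl m t f = (\<Sum>x\<in>refls m. f [x, t]) - (\<Sum>y\<in>refls m. f [t, y])"

lemma dl_add: "dl m t (\<lambda>zs. f zs + h zs) = dl m t f + dl m t h"
  by (simp add: dl_def sum.distrib)
lemma dl_scal: "dl m t (\<lambda>zs. c * f zs) = c * dl m t f"
  by (simp add: dl_def sum_distrib_left right_diff_distrib)
lemma dl_diff: "dl m t (\<lambda>zs. f zs - h zs) = dl m t f - dl m t h"
  by (simp add: dl_def sum_subtractf)
lemma dl_neg: "dl m t (\<lambda>zs. - f zs) = - dl m t f"
  by (simp add: dl_def sum_negf)
lemma dl_zero: "dl m t (\<lambda>_. 0) = 0"
  by (simp add: dl_def)
lemma dl_cong: "(\<And>zs. length zs = 2 \<Longrightarrow> f zs = h zs) \<Longrightarrow> dl m t f = dl m t h"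
  by (simp add: dl_def)

lemma dl_mono2: assumes "a \<in> refls m" "b \<in> refls m" and fin: "finite (refls m)"
  shows "dl m t (mono [a, b]) = (if b = t then 1 else 0) - (if a = t then 1 else 0)"
proof -
  have 1: "(\<Sum>x\<in>refls m. mono [a, b] [x, t]) = (\<Sum>x\<in>refls m. if x = a then (if b = t then 1 else 0) else 0)"
    by (intro sum.cong) (auto simp: mono_def)
  have 2: "(\<Sum>y\<in>refls m. mono [a, b] [t, y]) = (\<Sum>y\<in>refls m. if y = b then (if a = t then 1 else 0) else 0)"
    by (intro sum.cong) (auto simp: mono_def)
  show ?thesis unfolding dl_def 1 2 using assms by (simp add: sum.delta)
qed

lemma dl_mono_other: assumes "length l \<noteq> 2" shows "dl m t (mono l) = 0"
proof -
  have "\<And>x. [x, t] \<noteq> l" "\<And>x. [t, x] \<noteq> l" using assms by auto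
  then show ?thesis by (simp add: dl_def mono_def)
qed

lemma dl_rel: assumes "r \<in> relators m" and fin: "finite (refls m)" shows "dl m t r = 0"
  using assms(1) unfolding relators_iff
proof (elim disjE exE conjE)
  fix a b assume "r = anti a b" "a \<in> refls m" "b \<in> refls m"
  then show ?thesis using fin by (simp add: anti_def dl_add dl_mono2)
next
  fix ts assume r: "r = bnd ts" and s: "set ts \<subseteq> refls m" and d: "dependent_list ts"
  consider "length ts = 3" | "4 \<le> length ts" | "length ts = 2 \<and> ts ! 0 = ts ! 1"
    using d[unfolded dep_iff[OF s]] by linarith
  then show ?thesis
  proof cases
    case 1
    then obtain a b c where abc: "ts = [a, b, c]" by (rule len3_cases)
    then have "a \<in> refls m" "b \<in> refls m" "c \<in> refls m" using s by auto
    then show ?thesis using r abc fin by (simp add: bnd3 dl_add dl_diff dl_neg dl_mono2)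
  next
    case 2
    then have "dl m t r = dl m t (\<lambda>_. 0)" using r by (intro dl_cong) (simp add: bnd_long)
    then show ?thesis by (simp add: dl_zero)
  next
    case 3 then show ?thesis using r bnd_dep2 dl_zero by simp
  qed
qed

lemma gen_short:
  assumes r: "r \<in> relators m" and l: "length zs \<le> 2"
  shows "tmul (tmul (mono u) r) (mono v) zs = (if u = [] \<and> v = [] then r zs else 0)"
proof (cases "u = [] \<and> v = []")
  case True then show ?thesis by (simp add: tmul_Nil_left tmul_Nil_right)
next
  case False
  have "length (drop (length u) (take (length zs - length v) zs)) \<le> 1"
    if "take (length u) (take (length zs - length v) zs) = u" "length v \<le> length zs"
  proof -
    have "length u \<le> length zs - length v"
      using that(1) by (metis length_take min.bounded_iff nat_le_linear)
    moreover have "1 \<le> length u + length v" using False by (cases u; cases v) auto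
    ultimately show ?thesis using l that(2) by auto
  qed
  then show ?thesis using False rel_short[OF r]
    by (simp add: tmul_mono_right tmul_mono_left)
qed

lemma ideal_vanish:
  assumes "f \<in> os_ideal m" and fin: "finite (refls m)"
  shows "f [] = 0 \<and> (\<forall>t. f [t] = 0) \<and> (\<forall>t. dl m t f = 0)"
  using assms(1)
proof (induction rule: os_ideal.induct)
  case zero then show ?case by (simp add: dl_zero)
next
  case (add f g) then show ?case by (simp add: dl_add)
next
  case (scal f c) then show ?case by (simp add: smult_def dl_scal)
next
  case (gen r u v)
  let ?G = "tmul (tmul (mono u) r) (mono v)"
  have a: "?G [] = 0" using gen_short[OF gen(1), of "[]" u v] rel_short[OF gen(1), of "[]"] by simp
  have b: "?G [t] = 0" for t using gen_short[OF gen(1), of "[t]" u v] rel_short[OF gen(1), of "[t]"] by simp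
  have c: "dl m t ?G = 0" for t
  proof (cases "u = [] \<and> v = []")
    case True
    then have "dl m t ?G = dl m t r" by (intro dl_cong) (simp add: gen_short[OF gen(1)])
    then show ?thesis using dl_rel[OF gen(1) fin] by simp
  next
    case False
    then have "dl m t ?G = dl m t (\<lambda>_. 0)" by (intro dl_cong) (auto simp: gen_short[OF gen(1)])
    then show ?thesis by (simp add: dl_zero)
  qed
  show ?case using a b c by simp
qed


interpretation osk: kclosed "os_ideal m"
proof
  show "(\<lambda>_. 0) \<in> os_ideal m" by (rule os_ideal.zero)
next
  fix f h assume "f \<in> os_ideal m" "h \<in> os_ideal m"
  then show "(\<lambda>x. f x + h x) \<in> os_ideal m" by (rule os_ideal.add)
next
  fix f c assume "f \<in> os_ideal m"
  then show "(\<lambda>x. c * f x) \<in> os_ideal m" using os_ideal.scal[of f m c] by (simp add: smult_def)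
qed

lemma deg_kclosed: "kclosed (tensors_deg m p)"
proof
  show "(\<lambda>_. 0) \<in> tensors_deg m p" by (simp add: tensors_deg_def tensors_def)
next
  fix f h assume f: "f \<in> tensors_deg m p" and h: "h \<in> tensors_deg m p"
  have "{xs. f xs + h xs \<noteq> 0} \<subseteq> {xs. f xs \<noteq> 0} \<union> {xs. h xs \<noteq> 0}" by auto
  moreover have "set xs \<subseteq> refls m \<and> length xs = p" if "f xs + h xs \<noteq> 0" for xs
  proof -
    have "f xs \<noteq> 0 \<or> h xs \<noteq> 0" using that by auto
    then show ?thesis using f h unfolding tensors_deg_def tensors_def by blast
  qed
  ultimately show "(\<lambda>x. f x + h x) \<in> tensors_deg m p"
    using f h unfolding tensors_deg_def tensors_def by (auto intro: finite_subset)
next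
  fix f c assume f: "f \<in> tensors_deg m p"
  have "{xs. c * f xs \<noteq> 0} \<subseteq> {xs. f xs \<noteq> 0}" by auto
  then show "(\<lambda>x. c * f x) \<in> tensors_deg m p"
    using f unfolding tensors_deg_def tensors_def by (auto intro: finite_subset)
qed

lemma ten_kclosed: "kclosed (tensors m)"
proof
  show "(\<lambda>_. 0) \<in> tensors m" by (simp add: tensors_def)
next
  fix f h assume f: "f \<in> tensors m" and h: "h \<in> tensors m"
  have "{xs. f xs + h xs \<noteq> 0} \<subseteq> {xs. f xs \<noteq> 0} \<union> {xs. h xs \<noteq> 0}" by auto
  moreover have "set xs \<subseteq> refls m" if "f xs + h xs \<noteq> 0" for xs
  proof -
    have "f xs \<noteq> 0 \<or> h xs \<noteq> 0" using that by auto
    then show ?thesis using f h unfolding tensors_def by blast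
  qed
  ultimately show "(\<lambda>x. f x + h x) \<in> tensors m"
    using f h unfolding tensors_def by (auto intro: finite_subset)
next
  fix f c assume f: "f \<in> tensors m"
  have "{xs. c * f xs \<noteq> 0} \<subseteq> {xs. f xs \<noteq> 0}" by auto
  then show "(\<lambda>x. c * f x) \<in> tensors m"
    using f unfolding tensors_def by (auto intro: finite_subset)
qed

lemma int_kclosed: "kclosed A \<Longrightarrow> kclosed B \<Longrightarrow> kclosed (A \<inter> B)"
  unfolding kclosed_def by blast

lemma mono_deg: "set l \<subseteq> refls m \<Longrightarrow> mono l \<in> tensors_deg m (length l)"
  by (simp add: tensors_deg_def tensors_def mono_def)
lemma mono_ten: "set l \<subseteq> refls m \<Longrightarrow> mono l \<in> tensors m"
  by (simp add: tensors_def mono_def)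

lemma rel_ideal: "r \<in> relators m \<Longrightarrow> r \<in> os_ideal m"
  using os_ideal.gen[of r m "[]" "[]"] by (simp add: tmul_Nil_left tmul_Nil_right)

lemma gen_anti: "tmul (tmul (mono u) (anti a b)) (mono v) = (\<lambda>zs. mono (u @ [a, b] @ v) zs + mono (u @ [b, a] @ v) zs)"
  unfolding anti_def by (simp add: tmul_add_right tmul_add_left tmul_mono_mono eta_contract_eq)

lemma gen_bnd: "tmul (tmul (mono u) (bnd ts)) (mono v)
   = (\<lambda>zs. \<Sum>i<length ts. (-1) ^ (i + 1) * mono (u @ (take i ts @ drop (Suc i) ts) @ v) zs)"
  unfolding bnd_def by (simp only: tmul_sum_right[OF finite_lessThan] tmul_sum_left[OF finite_lessThan] tmul_mono_mono append_assoc)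

lemma sq_ideal: assumes "x \<in> refls m" "set u \<subseteq> refls m" "set v \<subseteq> refls m"
  shows "mono (u @ [x, x] @ v) \<in> os_ideal m"
proof -
  have "anti x x \<in> relators m" using assms(1) unfolding relators_iff by blast
  then have "tmul (tmul (mono u) (anti x x)) (mono v) \<in> os_ideal m" using assms by (intro os_ideal.gen)
  then have "(\<lambda>zs. mono (u @ [x, x] @ v) zs + mono (u @ [x, x] @ v) zs) \<in> os_ideal m"
    by (simp add: gen_anti)
  then have "(\<lambda>zs. (1/2) * (mono (u @ [x, x] @ v) zs + mono (u @ [x, x] @ v) zs)) \<in> os_ideal m"
    by (rule osk.Kscal)
  then show ?thesis by (simp add: eta_contract_eq)
qed

lemma bnd3_rel: assumes "a \<in> refls m" "b \<in> refls m" "c \<in> refls m" shows "bnd [a, b, c] \<in> relators m"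
proof -
  have "dependent_list [a, b, c]" using assms by (simp add: dep_iff)
  then show ?thesis using assms unfolding relators_iff by auto
qed

lemma rho_ideal: assumes "t1 \<in> refls m" "x \<in> refls m" "y \<in> refls m"
  shows "(\<lambda>zs. mono [x, y] zs - mono [t1, y] zs + mono [t1, x] zs) \<in> os_ideal m"
proof -
  have "bnd [t1, x, y] \<in> os_ideal m" using rel_ideal[OF bnd3_rel[OF assms]] .
  then have "(\<lambda>zs. (-1) * bnd [t1, x, y] zs) \<in> os_ideal m" by (rule osk.Kscal)
  moreover have "(\<lambda>zs. (-1) * bnd [t1, x, y] zs) = (\<lambda>zs. mono [x, y] zs - mono [t1, y] zs + mono [t1, x] zs)"
    by (rule ext) (simp add: bnd3 algebra_simps)
  ultimately show ?thesis by simp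
qed

lemma long_ideal: assumes "set zs \<subseteq> refls m" "3 \<le> length zs" shows "mono zs \<in> os_ideal m"
proof -
  obtain x y z v where zs: "zs = x # y # z # v"
    using assms(2) by (metis Suc_le_length_iff numeral_3_eq_3)
  have T: "x \<in> refls m" "y \<in> refls m" "z \<in> refls m" "set v \<subseteq> refls m" using assms(1) zs by auto
  have "tmul (tmul (mono [x]) (bnd [x, y, z])) (mono v) \<in> os_ideal m"
    using T by (intro os_ideal.gen bnd3_rel) auto
  then have h: "(\<lambda>zs. - mono (x # y # z # v) zs + mono (x # x # z # v) zs - mono (x # x # y # v) zs) \<in> os_ideal m"
    by (simp add: gen_bnd numeral_3_eq_3 lessThan_Suc)
  have s1: "mono (x # x # z # v) \<in> os_ideal m" using sq_ideal[of x m "[]" "z # v"] T by simp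
  have s2: "mono (x # x # y # v) \<in> os_ideal m" using sq_ideal[of x m "[]" "y # v"] T by simp
  have "(\<lambda>zs. (-1) * ((- mono (x # y # z # v) zs + mono (x # x # z # v) zs - mono (x # x # y # v) zs)
          - mono (x # x # z # v) zs + mono (x # x # y # v) zs)) \<in> os_ideal m"
    by (intro osk.Kscal osk.Kadd osk.Kdiff h s1 s2)
  then show ?thesis using zs by (simp add: eta_contract_eq)
qed

lemma cjT_refl: "w \<in> dihedral m \<Longrightarrow> t \<in> refls m \<Longrightarrow> cj (transpose w) t \<in> refls m"
  by (simp add: refl_cj transpose_dih)

lemma act_anti: "w \<in> dihedral m \<Longrightarrow> act w (anti a b) = anti (cj (transpose w) a) (cj (transpose w) b)"
  unfolding anti_def by (simp add: act_add act_mono eta_contract_eq)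

lemma act_bnd: "w \<in> dihedral m \<Longrightarrow> act w (bnd ts) = bnd (map (cj (transpose w)) ts)"
  unfolding bnd_def by (simp only: act_sum act_mono map_append take_map drop_map length_map)

lemma act_rel: assumes w: "w \<in> dihedral m" and r: "r \<in> relators m" shows "act w r \<in> relators m"
proof -
  let ?c = "cj (transpose w)"
  have o: "orthogonal_matrix w" using w orth_dih by blast
  have inj: "?c a = ?c b \<longleftrightarrow> a = b" for a b using cj_inv[OF o] by metis
  consider (A) t t' where "r = anti t t'" "t \<in> refls m" "t' \<in> refls m"
    | (B) ts where "r = bnd ts" "set ts \<subseteq> refls m" "dependent_list ts"
    using r unfolding relators_iff by blast
  then show ?thesis
  proof cases
    case A
    have "act w r = anti (?c t) (?c t')" using A w act_anti by simp
    moreover have "?c t \<in> refls m" "?c t' \<in> refls m" using A w cjT_refl by auto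
    ultimately show ?thesis unfolding relators_iff by blast
  next
    case B
    have s: "set (map ?c ts) \<subseteq> refls m" using B(2) w cjT_refl by auto
    have "dependent_list (map ?c ts)"
      using B(3) unfolding dep_iff[OF B(2)] dep_iff[OF s] by (auto simp: inj)
    then show ?thesis using B(1) s w unfolding relators_iff by (auto simp: act_bnd)
  qed
qed

lemma act_ideal: assumes w: "w \<in> dihedral m" and f: "f \<in> os_ideal m" shows "act w f \<in> os_ideal m"
  using f
proof (induction rule: os_ideal.induct)
  case zero then show ?case by (simp add: act_def os_ideal.zero)
next
  case (add f g) then show ?case by (simp add: act_add os_ideal.add)
next
  case (scal f c) then show ?case by (simp add: act_smult os_ideal.scal)
next
  case (gen r u v)
  have "act w (tmul (tmul (mono u) r) (mono v))
      = tmul (tmul (mono (map (cj (transpose w)) u)) (act w r)) (mono (map (cj (transpose w)) v))"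
    using w by (simp add: act_tmul act_mono)
  moreover have "set (map (cj (transpose w)) u) \<subseteq> refls m" "set (map (cj (transpose w)) v) \<subseteq> refls m"
    using gen w cjT_refl by auto
  ultimately show ?case using act_rel[OF w gen(1)] by (simp add: os_ideal.gen)
qed

lemma act_supp:
  assumes w: "w \<in> dihedral m" and f: "f \<in> tensors m"
  shows "act w f \<in> tensors m \<and> (\<forall>xs. act w f xs \<noteq> 0 \<longrightarrow> f (map (cj w) xs) \<noteq> 0)"
proof -
  let ?c = "cj (transpose w)"
  have o: "orthogonal_matrix w" using w orth_dih by blast
  have a: "act w f xs = f (map (cj w) xs)" for xs using act_eq[OF w] by simp
  have bk: "map ?c (map (cj w) xs) = xs" for xs using cj_inv'[OF o] by (simp add: map_idI)
  have "{xs. act w f xs \<noteq> 0} \<subseteq> map ?c ` {ys. f ys \<noteq> 0}"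
  proof
    fix xs assume "xs \<in> {xs. act w f xs \<noteq> 0}"
    then have "map (cj w) xs \<in> {ys. f ys \<noteq> 0}" by (simp add: a)
    then show "xs \<in> map ?c ` {ys. f ys \<noteq> 0}" using bk[of xs] by (metis image_eqI)
  qed
  then have fin: "finite {xs. act w f xs \<noteq> 0}" using f unfolding tensors_def by (auto intro: finite_subset)
  have "set xs \<subseteq> refls m" if "act w f xs \<noteq> 0" for xs
  proof
    fix y assume y: "y \<in> set xs"
    have "set (map (cj w) xs) \<subseteq> refls m" using that f unfolding tensors_def a by blast
    then have "cj w y \<in> refls m" using y by auto
    then have "?c (cj w y) \<in> refls m" using cjT_refl w by blast
    then show "y \<in> refls m" using cj_inv'[OF o] by simp
  qed
  then show ?thesis using fin by (simp add: tensors_def a)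
qed

lemma act_ten: "w \<in> dihedral m \<Longrightarrow> f \<in> tensors m \<Longrightarrow> act w f \<in> tensors m"
  using act_supp by blast

lemma act_deg: assumes w: "w \<in> dihedral m" and f: "f \<in> tensors_deg m p" shows "act w f \<in> tensors_deg m p"
proof -
  have f': "f \<in> tensors m" using f by (simp add: tensors_deg_def)
  have "length xs = p" if "act w f xs \<noteq> 0" for xs
    using act_supp[OF w f'] that f unfolding tensors_deg_def by fastforce
  then show ?thesis using act_ten[OF w f'] by (simp add: tensors_deg_def)
qed


definition phiA :: "nat \<Rightarrow> (real^2^2) list \<Rightarrow> ((real^2^2) list \<Rightarrow> complex) \<Rightarrow> complex" where
  "phiA m l f = (if l = [] then f [] else if length l = 1 then f l else dl m (l!1) f)"

lemma phiA_add: "phiA m l (\<lambda>x. f x + h x) = phiA m l f + phiA m l h"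
  by (simp add: phiA_def dl_add)
lemma phiA_scal: "phiA m l (\<lambda>x. c * f x) = c * phiA m l f"
  by (simp add: phiA_def dl_scal)

lemma phiA_K: assumes "f \<in> os_ideal m" "finite (refls m)" shows "phiA m l f = 0"
proof -
  have v: "f [] = 0 \<and> (\<forall>t. f [t] = 0) \<and> (\<forall>t. dl m t f = 0)" using ideal_vanish[OF assms] .
  show ?thesis
  proof (cases "length l = 1")
    case True then obtain t where "l = [t]" by (auto simp: length_Suc_conv)
    then show ?thesis using v by (simp add: phiA_def)
  qed (use v in \<open>auto simp: phiA_def\<close>)
qed

lemma expand: assumes "finite I" "\<And>zs. f zs \<noteq> 0 \<Longrightarrow> zs \<in> I"
  shows "f zs = (\<Sum>a\<in>I. f a * mono a zs)"
proof -
  have "(\<Sum>a\<in>I. f a * mono a zs) = (\<Sum>a\<in>I. if a = zs then f zs else 0)"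
    by (intro sum.cong) (auto simp: mono_def)
  also have "\<dots> = (if zs \<in> I then f zs else 0)" using assms(1) by (simp add: sum.delta')
  also have "\<dots> = f zs" using assms(2) by auto
  finally show ?thesis by simp
qed

definition I1 :: "nat \<Rightarrow> (real^2^2) list set" where "I1 m = (\<lambda>t. [t]) ` refls m"
definition I2 :: "nat \<Rightarrow> (real^2^2) list set" where "I2 m = (\<lambda>t. [sref, t]) ` (refls m - {sref})"
definition Iall :: "nat \<Rightarrow> (real^2^2) list set" where "Iall m = {[]} \<union> I1 m \<union> I2 m"

context
  fixes m :: nat
  assumes m2: "m \<ge> 2"
begin


lemma finT: "finite (refls m)" using finite_refls m2 by simp
lemma t1T: "sref \<in> (refls m)" by (rule sref_refl)

lemma finI: "finite (I1 m)" "finite (I2 m)" "finite (Iall m)"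
  using finT by (simp_all add: I1_def I2_def Iall_def)

lemma dual_all: assumes "a \<in> (Iall m)" "b \<in> (Iall m)" shows "phiA m a (mono b) = (if a = b then 1 else 0)"
proof -
  consider "a = []" | t where "a = [t]" "t \<in> (refls m)" | t where "a = [sref, t]" "t \<in> (refls m)" "t \<noteq> sref"
    using assms(1) unfolding Iall_def I1_def I2_def by blast
  then show ?thesis
  proof cases
    case 1 then show ?thesis by (auto simp: phiA_def mono_def)
  next
    case 2 then show ?thesis by (auto simp: phiA_def mono_def)
  next
    case 3
    have "phiA m a (mono b) = dl m t (mono b)" using 3 by (simp add: phiA_def)
    also have "\<dots> = (if a = b then 1 else 0)"
    proof -
      consider "b = []" | s where "b = [s]" | s where "b = [sref, s]" "s \<in> (refls m)"
        using assms(2) unfolding Iall_def I1_def I2_def by blast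
      then show ?thesis
      proof cases
        case 1 then show ?thesis using 3 by (simp add: dl_mono_other)
      next
        case 2 then show ?thesis using 3 by (simp add: dl_mono_other)
      next
        case (3 s) then show ?thesis using \<open>a = [sref, t]\<close> \<open>t \<noteq> sref\<close> t1T finT
          by (simp add: dl_mono2)
      qed
    qed
    finally show ?thesis .
  qed
qed

lemma I1_all: "(I1 m) \<subseteq> (Iall m)" and I2_all: "(I2 m) \<subseteq> (Iall m)" by (auto simp: Iall_def)

lemma cnt: "(\<Sum>t\<in>(refls m). if P t then 1 else 0) = (of_nat (card {t \<in> (refls m). P t}) :: complex)"
proof -
  have "{t \<in> (refls m). P t} = (refls m) \<inter> Collect P" by auto
  then show ?thesis using finT by (simp add: sum.If_cases)
qed

context
  fixes w assumes w: "w \<in> dihedral m"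
begin

abbreviation "c' \<equiv> cj (transpose w)"

lemma o: "orthogonal_matrix w" using w orth_dih by blast

lemma fixeq: "c' t = t \<longleftrightarrow> cj w t = t"
  using cj_inv[OF o] cj_inv'[OF o] by metis

lemma tr1: "(\<Sum>a\<in>(I1 m). phiA m a (act w (mono a))) = of_nat (card {t \<in> (refls m). cj w t = t})"
proof -
  have "(\<Sum>a\<in>(I1 m). phiA m a (act w (mono a))) = (\<Sum>t\<in>(refls m). phiA m [t] (act w (mono [t])))"
    unfolding I1_def by (subst sum.reindex) (auto simp: inj_on_def)
  also have "\<dots> = (\<Sum>t\<in>(refls m). if cj w t = t then 1 else 0)"
  proof (intro sum.cong refl)
    fix t assume "t \<in> (refls m)"
    have "act w (mono [t]) = mono [c' t]" using act_mono[OF w] by simp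
    then show "phiA m [t] (act w (mono [t])) = (if cj w t = t then 1 else 0)"
      using fixeq[of t] by (auto simp: phiA_def mono_def)
  qed
  finally show ?thesis by (simp add: cnt)
qed

lemma tr2: "(\<Sum>a\<in>(I2 m). phiA m a (act w (mono a))) = of_nat (card {t \<in> (refls m). cj w t = t}) - 1"
proof -
  have "(\<Sum>a\<in>(I2 m). phiA m a (act w (mono a))) = (\<Sum>t\<in>(refls m)-{sref}. phiA m [sref, t] (act w (mono [sref, t])))"
    unfolding I2_def by (subst sum.reindex) (auto simp: inj_on_def)
  also have "\<dots> = (\<Sum>t\<in>(refls m)-{sref}. (if c' t = t then 1 else 0) - (if c' sref = t then 1 else 0))"
  proof (intro sum.cong refl)
    fix t assume t: "t \<in> (refls m) - {sref}"
    have "c' sref \<in> (refls m)" "c' t \<in> (refls m)" using t t1T w cjT_refl by auto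
    then show "phiA m [sref, t] (act w (mono [sref, t])) = (if c' t = t then 1 else 0) - (if c' sref = t then 1 else 0)"
      using finT by (simp add: phiA_def act_mono[OF w] dl_mono2)
  qed
  also have "\<dots> = (\<Sum>t\<in>(refls m)-{sref}. if c' t = t then 1 else 0) - (\<Sum>t\<in>(refls m)-{sref}. if t = c' sref then 1 else 0)"
    by (simp add: sum_subtractf eq_commute)
  also have "(\<Sum>t\<in>(refls m)-{sref}. if t = c' sref then 1 else 0) = (if c' sref = sref then 0 else 1 :: complex)"
    using finT cjT_refl[OF w t1T] by (simp add: sum.delta)
  also have "(\<Sum>t\<in>(refls m)-{sref}. if c' t = t then 1 else 0) = (\<Sum>t\<in>(refls m). if c' t = t then 1 else 0) - (if c' sref = sref then 1 else 0 :: complex)"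
    using finT t1T by (simp add: sum.remove)
  finally show ?thesis by (simp add: fixeq cnt)
qed

lemma tr0: "phiA m [] (act w (mono [])) = 1"
  unfolding phiA_def act_mono[OF w] by (simp add: mono_def)

end

end


context
  fixes m :: nat
  assumes m2: "m \<ge> 2"
begin

lemma compl1: assumes f: "f \<in> tensors_deg m 1"
  shows "(\<lambda>zs. f zs - (\<Sum>a\<in>I1 m. phiA m a f * mono a zs)) \<in> os_ideal m \<inter> tensors_deg m 1"
proof -
  have "f zs = (\<Sum>a\<in>I1 m. f a * mono a zs)" for zs
  proof (rule expand[OF finI(1)[OF m2]])
    fix zs assume "f zs \<noteq> 0"
    then have "length zs = 1" "set zs \<subseteq> refls m" using f unfolding tensors_deg_def tensors_def by auto
    then show "zs \<in> I1 m" unfolding I1_def by (auto simp: length_Suc_conv)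
  qed
  moreover have "phiA m a f = f a" if "a \<in> I1 m" for a using that by (auto simp: I1_def phiA_def)
  ultimately have "(\<lambda>zs. f zs - (\<Sum>a\<in>I1 m. phiA m a f * mono a zs)) = (\<lambda>_. 0)"
  proof -
    assume e: "\<And>zs. f zs = (\<Sum>a\<in>I1 m. f a * mono a zs)" and p: "\<And>a. a \<in> I1 m \<Longrightarrow> phiA m a f = f a"
    have "(\<Sum>a\<in>I1 m. phiA m a f * mono a zs) = (\<Sum>a\<in>I1 m. f a * mono a zs)" for zs
      by (rule sum.cong) (simp_all add: p)
    then show ?thesis
    proof (intro ext)
      fix zs
      assume h: "\<And>zs. (\<Sum>a\<in>I1 m. phiA m a f * mono a zs) = (\<Sum>a\<in>I1 m. f a * mono a zs)"
      show "f zs - (\<Sum>a\<in>I1 m. phiA m a f * mono a zs) = 0" using e[of zs] h[of zs] by simp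
    qed
  qed
  then show ?thesis using os_ideal.zero kclosed.K0[OF deg_kclosed] by simp
qed

lemma E2: "(\<Sum>p\<in>refls m \<times> refls m. f [fst p, snd p] * (mono [sref, snd p] zs - mono [sref, fst p] zs))
   = (\<Sum>t\<in>refls m. dl m t f * mono [sref, t] zs)"
proof -
  let ?T = "refls m"
  have a: "(\<Sum>p\<in>?T \<times> ?T. f [fst p, snd p] * mono [sref, snd p] zs) = (\<Sum>x\<in>?T. \<Sum>y\<in>?T. f [x, y] * mono [sref, y] zs)"
    by (simp add: sum.cartesian_product split_def)
  also have "\<dots> = (\<Sum>y\<in>?T. (\<Sum>x\<in>?T. f [x, y]) * mono [sref, y] zs)"
    by (subst sum.swap) (simp add: sum_distrib_right)
  finally have A: "(\<Sum>p\<in>?T \<times> ?T. f [fst p, snd p] * mono [sref, snd p] zs) = (\<Sum>y\<in>?T. (\<Sum>x\<in>?T. f [x, y]) * mono [sref, y] zs)" .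
  have "(\<Sum>p\<in>?T \<times> ?T. f [fst p, snd p] * mono [sref, fst p] zs) = (\<Sum>x\<in>?T. \<Sum>y\<in>?T. f [x, y] * mono [sref, x] zs)"
    by (simp add: sum.cartesian_product split_def)
  also have "\<dots> = (\<Sum>x\<in>?T. (\<Sum>y\<in>?T. f [x, y]) * mono [sref, x] zs)"
    by (simp add: sum_distrib_right)
  finally have B: "(\<Sum>p\<in>?T \<times> ?T. f [fst p, snd p] * mono [sref, fst p] zs) = (\<Sum>x\<in>?T. (\<Sum>y\<in>?T. f [x, y]) * mono [sref, x] zs)" .
  show ?thesis
    by (simp add: right_diff_distrib sum_subtractf A B dl_def left_diff_distrib)
qed

lemma compl2: assumes f: "f \<in> tensors_deg m 2"
  shows "(\<lambda>zs. f zs - (\<Sum>a\<in>I2 m. phiA m a f * mono a zs)) \<in> os_ideal m \<inter> tensors_deg m 2"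
proof -
  let ?T = "refls m" and ?P = "refls m \<times> refls m"
  have finT: "finite ?T" using finT[OF m2] .
  have finP: "finite ?P" using finT by simp
  have sI2: "(\<Sum>a\<in>I2 m. phiA m a f * mono a zs) = (\<Sum>t\<in>?T-{sref}. dl m t f * mono [sref, t] zs)" for zs
    unfolding I2_def by (subst sum.reindex) (auto simp: inj_on_def phiA_def)
  have E1: "f zs = (\<Sum>p\<in>?P. f [fst p, snd p] * mono [fst p, snd p] zs)" for zs
  proof -
    have "f zs = (\<Sum>a\<in>(\<lambda>p. [fst p, snd p]) ` ?P. f a * mono a zs)"
    proof (rule expand)
      show "finite ((\<lambda>p. [fst p, snd p]) ` ?P)" using finP by simp
    next
      fix zs assume "f zs \<noteq> 0"
      then have "length zs = 2" "set zs \<subseteq> refls m" using f unfolding tensors_deg_def tensors_def by auto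
      then show "zs \<in> (\<lambda>p. [fst p, snd p]) ` ?P" by (auto simp: numeral_2_eq_2 length_Suc_conv image_iff)
    qed
    also have "\<dots> = (\<Sum>p\<in>?P. f [fst p, snd p] * mono [fst p, snd p] zs)"
      by (subst sum.reindex) (auto simp: inj_on_def prod_eq_iff)
    finally show ?thesis .
  qed
  define rho where "rho p = (\<lambda>zs. mono [fst p, snd p] zs - mono [sref, snd p] zs + mono [sref, fst p] zs)" for p
  have key: "f zs - (\<Sum>a\<in>I2 m. phiA m a f * mono a zs)
     = (\<Sum>p\<in>?P. f [fst p, snd p] * rho p zs) + dl m sref f * mono [sref, sref] zs" for zs
  proof -
    have "(\<Sum>p\<in>?P. f [fst p, snd p] * rho p zs)
        = (\<Sum>p\<in>?P. f [fst p, snd p] * mono [fst p, snd p] zs)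
          - (\<Sum>p\<in>?P. f [fst p, snd p] * (mono [sref, snd p] zs - mono [sref, fst p] zs))"
      by (simp add: rho_def sum_subtractf[symmetric] algebra_simps)
    also have "\<dots> = f zs - (\<Sum>t\<in>?T. dl m t f * mono [sref, t] zs)" by (simp add: E2 E1[symmetric])
    also have "(\<Sum>t\<in>?T. dl m t f * mono [sref, t] zs)
        = dl m sref f * mono [sref, sref] zs + (\<Sum>t\<in>?T-{sref}. dl m t f * mono [sref, t] zs)"
      by (rule sum.remove[OF finT sref_refl])
    finally show ?thesis by (simp add: sI2)
  qed
  have i1: "(\<lambda>zs. \<Sum>p\<in>?P. f [fst p, snd p] * rho p zs) \<in> os_ideal m"
    by (rule osk.Ksum_scal[OF finP]) (auto simp: rho_def intro: rho_ideal[OF sref_refl])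
  have i2: "(\<lambda>zs. dl m sref f * mono [sref, sref] zs) \<in> os_ideal m"
    using sq_ideal[OF sref_refl, of "[]" m "[]"] by (intro osk.Kscal) simp
  have I: "(\<lambda>zs. f zs - (\<Sum>a\<in>I2 m. phiA m a f * mono a zs)) \<in> os_ideal m"
    using osk.Kadd[OF i1 i2] by (simp add: key)
  have mono2: "mono a \<in> tensors_deg m 2" if aI: "a \<in> I2 m" for a
  proof -
    obtain t where t: "a = [sref, t]" "t \<in> refls m" using aI unfolding I2_def by auto
    then have "set a \<subseteq> refls m" "length a = 2" using sref_refl by auto
    then show ?thesis using mono_deg[of a m] by simp
  qed
  have D: "(\<lambda>zs. f zs - (\<Sum>a\<in>I2 m. phiA m a f * mono a zs)) \<in> tensors_deg m 2"
    by (intro kclosed.Kdiff[OF deg_kclosed] f kclosed.Ksum_scal[OF deg_kclosed] finI(2)[OF m2] mono2)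
  show ?thesis using I D by simp
qed

end


lemma qtrace_gen:
  assumes kc: "kclosed K"
    and a1: "finite I"
    and a2: "\<And>a. a \<in> I \<Longrightarrow> B a \<in> U"
    and a3: "\<And>a f h. a \<in> I \<Longrightarrow> phi a (\<lambda>x. f x + h x) = phi a f + phi a h"
    and a4: "\<And>a f c. a \<in> I \<Longrightarrow> phi a (\<lambda>x. c * f x) = c * phi a f"
    and a5: "\<And>a f. a \<in> I \<Longrightarrow> f \<in> K \<Longrightarrow> phi a f = 0"
    and a6: "\<And>a b. a \<in> I \<Longrightarrow> b \<in> I \<Longrightarrow> phi a (B b) = (if a = b then 1 else 0)"
    and a7: "\<And>f. f \<in> U \<Longrightarrow> (\<lambda>x. f x - (\<Sum>a\<in>I. phi a f * B a x)) \<in> K"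
    and a8: "\<And>f. f \<in> U \<Longrightarrow> g f \<in> U"
    and a9: "\<And>f. f \<in> K \<Longrightarrow> g f \<in> K"
    and a10: "\<And>f h. g (\<lambda>x. f x + h x) = (\<lambda>x. g f x + g h x)"
    and a11: "\<And>f c. g (\<lambda>x. c * f x) = (\<lambda>x. c * g f x)"
  shows "qtrace U K g = (\<Sum>a\<in>I. phi a (g (B a)))"
proof -
  have "qsetup K U g B phi I"
    apply (rule qsetup.intro[OF kc])
    apply (rule qsetup_axioms.intro)
    apply (fact a1)
    apply (fact a2)
    apply (fact a3)
    apply (fact a4)
    apply (fact a5)
    apply (fact a6)
    apply (fact a7)
    apply (fact a8)
    apply (fact a9)
    apply (fact a10)
    apply (fact a11)
    done
  then show ?thesis by (rule qsetup.qtrace_eq)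
qed

context
  fixes m :: nat
  assumes m2: "m \<ge> 2"
begin

lemma compl_all: assumes f: "f \<in> tensors m"
  shows "(\<lambda>zs. f zs - (\<Sum>a\<in>Iall m. phiA m a f * mono a zs)) \<in> os_ideal m"
proof -
  have finT: "finite (refls m)" using finT[OF m2] .
  define f1 where "f1 = (\<lambda>zs. if length zs = 1 then f zs else 0)"
  define f2 where "f2 = (\<lambda>zs. if length zs = 2 then f zs else 0)"
  define f3 where "f3 = (\<lambda>zs. if 3 \<le> length zs then f zs else 0)"
  have fsupp: "finite {zs. f zs \<noteq> 0}" "\<And>zs. f zs \<noteq> 0 \<Longrightarrow> set zs \<subseteq> refls m"
    using f unfolding tensors_def by auto
  have f2deg: "f2 \<in> tensors_deg m 2"
  proof -
    have "{zs. f2 zs \<noteq> 0} \<subseteq> {zs. f zs \<noteq> 0}" by (auto simp: f2_def)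
    then show ?thesis using fsupp unfolding tensors_deg_def tensors_def f2_def
      by (auto intro: finite_subset split: if_splits)
  qed
  define S3 where "S3 = {zs. f zs \<noteq> 0 \<and> 3 \<le> length zs}"
  have finS3: "finite S3" using fsupp(1) by (rule finite_subset[rotated]) (auto simp: S3_def)
  have f3e: "f3 zs = (\<Sum>a\<in>S3. f3 a * mono a zs)" for zs
    by (rule expand[OF finS3]) (auto simp: S3_def f3_def split: if_splits)
  have f3I: "f3 \<in> os_ideal m"
  proof -
    have "(\<lambda>zs. \<Sum>a\<in>S3. f3 a * mono a zs) \<in> os_ideal m"
      by (rule osk.Ksum_scal[OF finS3]) (simp add: S3_def long_ideal fsupp(2))
    moreover have "(\<lambda>zs. \<Sum>a\<in>S3. f3 a * mono a zs) = f3" by (rule ext) (rule f3e[symmetric])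
    ultimately show ?thesis by simp
  qed
  have c2: "(\<lambda>zs. f2 zs - (\<Sum>a\<in>I2 m. phiA m a f2 * mono a zs)) \<in> os_ideal m"
    using compl2[OF m2 f2deg] by simp
  have disj1: "{[]} \<inter> I1 m = {}" by (auto simp: I1_def)
  have disj2: "({[]} \<union> I1 m) \<inter> I2 m = {}" by (auto simp: I1_def I2_def)
  have split: "(\<Sum>a\<in>Iall m. phiA m a f * mono a zs)
     = phiA m [] f * mono [] zs + (\<Sum>a\<in>I1 m. phiA m a f * mono a zs) + (\<Sum>a\<in>I2 m. phiA m a f * mono a zs)" for zs
  proof -
    have "(\<Sum>a\<in>Iall m. phiA m a f * mono a zs) = (\<Sum>a\<in>{[]} \<union> I1 m. phiA m a f * mono a zs) + (\<Sum>a\<in>I2 m. phiA m a f * mono a zs)"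
      unfolding Iall_def by (rule sum.union_disjoint) (use finI[OF m2] disj2 in auto)
    also have "(\<Sum>a\<in>{[]} \<union> I1 m. phiA m a f * mono a zs) = phiA m [] f * mono [] zs + (\<Sum>a\<in>I1 m. phiA m a f * mono a zs)"
      by (subst sum.union_disjoint) (use finI[OF m2] disj1 in auto)
    finally show ?thesis .
  qed
  have s1: "(\<Sum>a\<in>I1 m. phiA m a f * mono a zs) = f1 zs" for zs
  proof -
    have "(\<Sum>a\<in>I1 m. phiA m a f * mono a zs) = (\<Sum>a\<in>I1 m. f1 a * mono a zs)"
      by (rule sum.cong) (auto simp: I1_def phiA_def f1_def)
    also have "\<dots> = f1 zs"
    proof (rule expand[OF finI(1)[OF m2], symmetric])
      fix zs assume "f1 zs \<noteq> 0"
      then have "length zs = 1" "set zs \<subseteq> refls m" using fsupp(2) by (auto simp: f1_def split: if_splits)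
      then show "zs \<in> I1 m" unfolding I1_def by (auto simp: length_Suc_conv)
    qed
    finally show ?thesis .
  qed
  have s2: "(\<Sum>a\<in>I2 m. phiA m a f * mono a zs) = (\<Sum>a\<in>I2 m. phiA m a f2 * mono a zs)" for zs
  proof (rule sum.cong[OF refl])
    fix a assume "a \<in> I2 m"
    then obtain t where "a = [sref, t]" unfolding I2_def by auto
    moreover have "dl m t f = dl m t f2" by (rule dl_cong) (simp add: f2_def)
    ultimately show "phiA m a f * mono a zs = phiA m a f2 * mono a zs" by (simp add: phiA_def)
  qed
  have dec: "f zs = (if zs = [] then f [] else 0) + f1 zs + f2 zs + f3 zs" for zs
  proof -
    consider "length zs = 0" | "length zs = 1" | "length zs = 2" | "3 \<le> length zs" by linarith
    then show ?thesis by cases (auto simp: f1_def f2_def f3_def)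
  qed
  have key: "(\<lambda>zs. f zs - (\<Sum>a\<in>Iall m. phiA m a f * mono a zs))
      = (\<lambda>zs. (f2 zs - (\<Sum>a\<in>I2 m. phiA m a f2 * mono a zs)) + f3 zs)"
  proof (rule ext)
    fix zs :: "(real^2^2) list"
    have "phiA m [] f * mono [] zs = (if zs = [] then f [] else 0)" by (simp add: phiA_def mono_def)
    then show "f zs - (\<Sum>a\<in>Iall m. phiA m a f * mono a zs) = (f2 zs - (\<Sum>a\<in>I2 m. phiA m a f2 * mono a zs)) + f3 zs"
      using dec[of zs] by (simp add: split s1 s2)
  qed
  show ?thesis unfolding key using osk.Kadd[OF c2 f3I] .
qed

end


theorem proposition5p8:
  fixes m :: nat
  assumes "m \<ge> 2"
  shows "(\<forall>w\<in>dihedral m. oschar_deg m 1 w = permchar m w)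
       \<and> (\<forall>w\<in>dihedral m. oschar_deg m 2 w = permchar m w - 1)
       \<and> (\<forall>w\<in>dihedral m. oschar m w = 2 * permchar m w)"
proof -
  have fT: "finite (refls m)" using finT[OF assms] .
  have kc_os: "kclosed (os_ideal m)" by (rule osk.kclosed_axioms)
  have B1: "mono a \<in> tensors_deg m 1" if aI: "a \<in> I1 m" for a
  proof -
    obtain t where "a = [t]" "t \<in> refls m" using aI unfolding I1_def by auto
    then have "set a \<subseteq> refls m" "length a = 1" by auto
    then show ?thesis using mono_deg[of a m] by simp
  qed
  have B2: "mono a \<in> tensors_deg m 2" if aI: "a \<in> I2 m" for a
  proof -
    obtain t where "a = [sref, t]" "t \<in> refls m" using aI unfolding I2_def by auto
    then have "set a \<subseteq> refls m" "length a = 2" using sref_refl by auto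
    then show ?thesis using mono_deg[of a m] by simp
  qed
  have BA: "mono a \<in> tensors m" if "a \<in> Iall m" for a
  proof -
    have "set a \<subseteq> refls m" using that sref_refl unfolding Iall_def I1_def I2_def by auto
    then show ?thesis by (rule mono_ten)
  qed
  have main: "oschar_deg m 1 w = permchar m w \<and> oschar_deg m 2 w = permchar m w - 1
              \<and> oschar m w = 2 * permchar m w" if w: "w \<in> dihedral m" for w
  proof -
    let ?F = "of_nat (card {t \<in> refls m. cj w t = t}) :: complex"
    have pc: "permchar m w = ?F" by (rule permchar_eq[OF w])
    have d1: "oschar_deg m 1 w = (\<Sum>a\<in>I1 m. phiA m a (act w (mono a)))"
      unfolding oschar_deg_def
    proof (rule qtrace_gen)
      show "kclosed (os_ideal m \<inter> tensors_deg m 1)" by (rule int_kclosed[OF kc_os deg_kclosed])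
      show "finite (I1 m)" by (rule finI(1)[OF assms])
      show "\<And>a. a \<in> I1 m \<Longrightarrow> mono a \<in> tensors_deg m 1" by (rule B1)
      show "\<And>a f h. a \<in> I1 m \<Longrightarrow> phiA m a (\<lambda>x. f x + h x) = phiA m a f + phiA m a h" by (rule phiA_add)
      show "\<And>a f c. a \<in> I1 m \<Longrightarrow> phiA m a (\<lambda>x. c * f x) = c * phiA m a f" by (rule phiA_scal)
      show "\<And>a f. a \<in> I1 m \<Longrightarrow> f \<in> os_ideal m \<inter> tensors_deg m 1 \<Longrightarrow> phiA m a f = 0"
        using phiA_K fT by blast
      show "\<And>a b. a \<in> I1 m \<Longrightarrow> b \<in> I1 m \<Longrightarrow> phiA m a (mono b) = (if a = b then 1 else 0)"
        using dual_all[OF assms] I1_all[OF assms] by blast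
      show "\<And>f. f \<in> tensors_deg m 1 \<Longrightarrow> (\<lambda>x. f x - (\<Sum>a\<in>I1 m. phiA m a f * mono a x)) \<in> os_ideal m \<inter> tensors_deg m 1"
        by (rule compl1[OF assms])
      show "\<And>f. f \<in> tensors_deg m 1 \<Longrightarrow> act w f \<in> tensors_deg m 1" by (rule act_deg[OF w])
      show "\<And>f. f \<in> os_ideal m \<inter> tensors_deg m 1 \<Longrightarrow> act w f \<in> os_ideal m \<inter> tensors_deg m 1"
        using act_ideal[OF w] act_deg[OF w] by blast
      show "\<And>f h. act w (\<lambda>x. f x + h x) = (\<lambda>x. act w f x + act w h x)" by (rule act_add)
      show "\<And>f c. act w (\<lambda>x. c * f x) = (\<lambda>x. c * act w f x)" by (rule act_scal)
    qed
    have d2: "oschar_deg m 2 w = (\<Sum>a\<in>I2 m. phiA m a (act w (mono a)))"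
      unfolding oschar_deg_def
    proof (rule qtrace_gen)
      show "kclosed (os_ideal m \<inter> tensors_deg m 2)" by (rule int_kclosed[OF kc_os deg_kclosed])
      show "finite (I2 m)" by (rule finI(2)[OF assms])
      show "\<And>a. a \<in> I2 m \<Longrightarrow> mono a \<in> tensors_deg m 2" by (rule B2)
      show "\<And>a f h. a \<in> I2 m \<Longrightarrow> phiA m a (\<lambda>x. f x + h x) = phiA m a f + phiA m a h" by (rule phiA_add)
      show "\<And>a f c. a \<in> I2 m \<Longrightarrow> phiA m a (\<lambda>x. c * f x) = c * phiA m a f" by (rule phiA_scal)
      show "\<And>a f. a \<in> I2 m \<Longrightarrow> f \<in> os_ideal m \<inter> tensors_deg m 2 \<Longrightarrow> phiA m a f = 0"
        using phiA_K fT by blast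
      show "\<And>a b. a \<in> I2 m \<Longrightarrow> b \<in> I2 m \<Longrightarrow> phiA m a (mono b) = (if a = b then 1 else 0)"
        using dual_all[OF assms] I2_all[OF assms] by blast
      show "\<And>f. f \<in> tensors_deg m 2 \<Longrightarrow> (\<lambda>x. f x - (\<Sum>a\<in>I2 m. phiA m a f * mono a x)) \<in> os_ideal m \<inter> tensors_deg m 2"
        by (rule compl2[OF assms])
      show "\<And>f. f \<in> tensors_deg m 2 \<Longrightarrow> act w f \<in> tensors_deg m 2" by (rule act_deg[OF w])
      show "\<And>f. f \<in> os_ideal m \<inter> tensors_deg m 2 \<Longrightarrow> act w f \<in> os_ideal m \<inter> tensors_deg m 2"
        using act_ideal[OF w] act_deg[OF w] by blast
      show "\<And>f h. act w (\<lambda>x. f x + h x) = (\<lambda>x. act w f x + act w h x)" by (rule act_add)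
      show "\<And>f c. act w (\<lambda>x. c * f x) = (\<lambda>x. c * act w f x)" by (rule act_scal)
    qed
    have dA: "oschar m w = (\<Sum>a\<in>Iall m. phiA m a (act w (mono a)))"
      unfolding oschar_def
    proof (rule qtrace_gen)
      show "kclosed (os_ideal m)" by (rule kc_os)
      show "finite (Iall m)" by (rule finI(3)[OF assms])
      show "\<And>a. a \<in> Iall m \<Longrightarrow> mono a \<in> tensors m" by (rule BA)
      show "\<And>a f h. a \<in> Iall m \<Longrightarrow> phiA m a (\<lambda>x. f x + h x) = phiA m a f + phiA m a h" by (rule phiA_add)
      show "\<And>a f c. a \<in> Iall m \<Longrightarrow> phiA m a (\<lambda>x. c * f x) = c * phiA m a f" by (rule phiA_scal)
      show "\<And>a f. a \<in> Iall m \<Longrightarrow> f \<in> os_ideal m \<Longrightarrow> phiA m a f = 0"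
        using phiA_K fT by blast
      show "\<And>a b. a \<in> Iall m \<Longrightarrow> b \<in> Iall m \<Longrightarrow> phiA m a (mono b) = (if a = b then 1 else 0)"
        by (rule dual_all[OF assms])
      show "\<And>f. f \<in> tensors m \<Longrightarrow> (\<lambda>x. f x - (\<Sum>a\<in>Iall m. phiA m a f * mono a x)) \<in> os_ideal m"
        by (rule compl_all[OF assms])
      show "\<And>f. f \<in> tensors m \<Longrightarrow> act w f \<in> tensors m" by (rule act_ten[OF w])
      show "\<And>f. f \<in> os_ideal m \<Longrightarrow> act w f \<in> os_ideal m" by (rule act_ideal[OF w])
      show "\<And>f h. act w (\<lambda>x. f x + h x) = (\<lambda>x. act w f x + act w h x)" by (rule act_add)
      show "\<And>f c. act w (\<lambda>x. c * f x) = (\<lambda>x. c * act w f x)" by (rule act_scal)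
    qed
    have disj1: "{[]} \<inter> I1 m = {}" by (auto simp: I1_def)
    have disj2: "({[]} \<union> I1 m) \<inter> I2 m = {}" by (auto simp: I1_def I2_def)
    have "(\<Sum>a\<in>Iall m. phiA m a (act w (mono a)))
        = (\<Sum>a\<in>{[]} \<union> I1 m. phiA m a (act w (mono a))) + (\<Sum>a\<in>I2 m. phiA m a (act w (mono a)))"
      unfolding Iall_def by (rule sum.union_disjoint) (use finI[OF assms] disj2 in auto)
    also have "(\<Sum>a\<in>{[]} \<union> I1 m. phiA m a (act w (mono a)))
        = phiA m [] (act w (mono [])) + (\<Sum>a\<in>I1 m. phiA m a (act w (mono a)))"
      by (subst sum.union_disjoint) (use finI[OF assms] disj1 in auto)
    finally have "oschar m w = 1 + ?F + (?F - 1)"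
      using dA tr0[OF assms w] tr1[OF assms w] tr2[OF assms w] by simp
    then have "oschar m w = 2 * ?F" by simp
    then show ?thesis using d1 d2 tr1[OF assms w] tr2[OF assms w] pc by simp
  qed
  show ?thesis using main by blast
qed


end
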